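(* Let $(H,\Lambda,\lambda)$ be an integral Hopf algebra in a strict symmetric monoidal category $\mathcal{C}$, with monoid $(\mu,\eta)$, comonoid $(\Delta,\varepsilon)$ and antipode $s$. Put $\beta:=\lambda\circ\mu$, $\gamma:=(s\otimes\mathrm{id}_H)\circ\Delta\circ\Lambda$ and $\gamma':=\Delta\circ\Lambda$. The following are equivalent: (i) $H$ is nondegenerate, i.e. $(\mathrm{id}_H\otimes\beta)\circ(\gamma\otimes\mathrm{id}_H)=\mathrm{id}_H=(\beta\otimes\mathrm{id}_H)\circ(\mathrm{id}_H\otimes\gamma)$; (ii) $\beta$ is a Frobenius form for the monoid $(H,\mu,\eta)$; (iii) $\gamma'$ is a Frobenius form for the comonoid $(H,\Delta,\varepsilon)$. Consequently, if $H$ is nondegenerate then $H$ admits a pre-Hopf-Frobenius algebra structure, i.e. there exist a comonoid $(\delta_g,\varepsilon_g)$ and a monoid $(\mu_r,\eta_r)$ on $H$ such that taking green monoid $(\mu,\eta)$, green comonoid $(\delta_g,\varepsilon_g)$, red monoid $(\mu_r,\eta_r)$, red comonoid $(\Delta,\varepsilon)$ and antipode $s$ gives a pre-Hopf-Frobenius algebra.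
   Context: $\mathcal{C}$ is a strict symmetric monoidal category with unit object $I$ and symmetry $\sigma$. A Hopf algebra $(H,\mu,\eta,\Delta,\varepsilon,s)$: an object $H$ with an associative unital monoid $(\mu\colon H\otimes H\to H,\eta\colon I\to H)$ and a coassociative counital comonoid $(\Delta\colon H\to H\otimes H,\varepsilon\colon H\to I)$ satisfying $\Delta\circ\mu=(\mu\otimes\mu)\circ(\mathrm{id}\otimes\sigma_{H,H}\otimes\mathrm{id})\circ(\Delta\otimes\Delta)$, $\Delta\circ\eta=\eta\otimes\eta$, $\varepsilon\circ\mu=\varepsilon\otimes\varepsilon$, $\varepsilon\circ\eta=\mathrm{id}_I$, and $s\colon H\to H$ with $\mu\circ(s\otimes\mathrm{id})\circ\Delta=\eta\circ\varepsilon=\mu\circ(\mathrm{id}\otimes s)\circ\Delta$. A left cointegral is a point $\Lambda\colon I\to H$ with $\mu\circ(\Lambda\otimes\mathrm{id}_H)=\Lambda\circ\varepsilon$; a right integral is a copoint $\lambda\colon H\to I$ with $(\mathrm{id}_H\otimes\lambda)\circ\Delta=\eta\circ\lambda$; $(H,\Lambda,\lambda)$ is an integral Hopf algebra if moreover $\lambda\circ\Lambda=\mathrm{id}_I$. A Frobenius form for a monoid $(F,\mu,\eta)$ is a morphism $\beta\colon F\otimes F\to I$ with $\beta\circ(\mu\otimes\mathrm{id}_F)=\beta\circ(\mathrm{id}_F\otimes\mu)$ admitting an inverse $\bar\beta\colon I\to F\otimes F$, meaning $(\mathrm{id}_F\otimes\beta)\circ(\bar\beta\otimes\mathrm{id}_F)=\mathrm{id}_F=(\beta\otimes\mathrm{id}_F)\circ(\mathrm{id}_F\otimes\bar\beta)$.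 Dually, a Frobenius form for a comonoid $(F,\Delta,\varepsilon)$ is a morphism $\gamma\colon I\to F\otimes F$ with $(\Delta\otimes\mathrm{id}_F)\circ\gamma=(\mathrm{id}_F\otimes\Delta)\circ\gamma$ admitting an inverse $\bar\gamma\colon F\otimes F\to I$ satisfying the same two equations with the roles of $\gamma,\bar\gamma$ as cap and cup. A Frobenius algebra is a monoid $(m,u)$ and comonoid $(d,c)$ on the same object with $(\mathrm{id}\otimes m)\circ(d\otimes\mathrm{id})=d\circ m=(m\otimes\mathrm{id})\circ(\mathrm{id}\otimes d)$. A pre-Hopf-Frobenius algebra consists of an object $H$ with a green monoid $(\mu_g,\eta_g)$, green comonoid $(\delta_g,\varepsilon_g)$, red monoid $(\mu_r,\eta_r)$, red comonoid $(\delta_r,\varepsilon_r)$ and an endomorphism $s$ such that $(\mu_g,\eta_g,\delta_g,\varepsilon_g)$ and $(\mu_r,\eta_r,\delta_r,\varepsilon_r)$ are Frobenius algebras and $(\mu_g,\eta_g,\delta_r,\varepsilon_r,s)$ is a Hopf algebra. *)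

theory Defs
  imports Main
begin

text \<open>A (strict symmetric monoidal) category is presented by its data: a predicate of
objects, a predicate of arrows, domain/codomain, composition (comp g f = g after f),
identities, tensor on objects and on arrows, the unit object and the symmetry.\<close>

record ('o, 'm) smc =
  Obj  :: "'o \<Rightarrow> bool"
  Arr  :: "'m \<Rightarrow> bool"
  Dom  :: "'m \<Rightarrow> 'o"
  Cod  :: "'m \<Rightarrow> 'o"
  Comp :: "'m \<Rightarrow> 'm \<Rightarrow> 'm"
  Id   :: "'o \<Rightarrow> 'm"
  OT   :: "'o \<Rightarrow> 'o \<Rightarrow> 'o"
  MT   :: "'m \<Rightarrow> 'm \<Rightarrow> 'm"
  Unit :: "'o"
  Sym  :: "'o \<Rightarrow> 'o \<Rightarrow> 'm"

definition hom :: "('o, 'm, 'z) smc_scheme \<Rightarrow> 'o \<Rightarrow> 'o \<Rightarrow> 'm \<Rightarrow> bool" where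
  "hom C A B f \<longleftrightarrow> Arr C f \<and> Dom C f = A \<and> Cod C f = B"

definition strict_smc :: "('o, 'm, 'z) smc_scheme \<Rightarrow> bool" where
  "strict_smc C \<longleftrightarrow>
    \<comment> \<open>category\<close>
    (\<forall>f. Arr C f \<longrightarrow> Obj C (Dom C f) \<and> Obj C (Cod C f)) \<and>
    (\<forall>A. Obj C A \<longrightarrow> hom C A A (Id C A)) \<and>
    (\<forall>A B D f g. hom C A B f \<longrightarrow> hom C B D g \<longrightarrow> hom C A D (Comp C g f)) \<and>
    (\<forall>A B f. hom C A B f \<longrightarrow> Comp C (Id C B) f = f \<and> Comp C f (Id C A) = f) \<and>
    (\<forall>A B D E f g h. hom C A B f \<longrightarrow> hom C B D g \<longrightarrow> hom C D E h \<longrightarrow>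
        Comp C h (Comp C g f) = Comp C (Comp C h g) f) \<and>
    \<comment> \<open>tensor bifunctor\<close>
    Obj C (Unit C) \<and>
    (\<forall>A B. Obj C A \<longrightarrow> Obj C B \<longrightarrow> Obj C (OT C A B)) \<and>
    (\<forall>A B D E f g. hom C A B f \<longrightarrow> hom C D E g \<longrightarrow> hom C (OT C A D) (OT C B E) (MT C f g)) \<and>
    (\<forall>A B. Obj C A \<longrightarrow> Obj C B \<longrightarrow> MT C (Id C A) (Id C B) = Id C (OT C A B)) \<and>
    (\<forall>A B D A' B' D' f g f' g'. hom C A B f \<longrightarrow> hom C B D g \<longrightarrow>
        hom C A' B' f' \<longrightarrow> hom C B' D' g' \<longrightarrow>
        MT C (Comp C g f) (Comp C g' f') = Comp C (MT C g g') (MT C f f')) \<and>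
    \<comment> \<open>strictness\<close>
    (\<forall>A B D. Obj C A \<longrightarrow> Obj C B \<longrightarrow> Obj C D \<longrightarrow> OT C (OT C A B) D = OT C A (OT C B D)) \<and>
    (\<forall>A. Obj C A \<longrightarrow> OT C (Unit C) A = A \<and> OT C A (Unit C) = A) \<and>
    (\<forall>f g h. Arr C f \<longrightarrow> Arr C g \<longrightarrow> Arr C h \<longrightarrow> MT C (MT C f g) h = MT C f (MT C g h)) \<and>
    (\<forall>f. Arr C f \<longrightarrow> MT C (Id C (Unit C)) f = f \<and> MT C f (Id C (Unit C)) = f) \<and>
    \<comment> \<open>symmetry\<close>
    (\<forall>A B. Obj C A \<longrightarrow> Obj C B \<longrightarrow> hom C (OT C A B) (OT C B A) (Sym C A B)) \<and>
    (\<forall>A B D E f g. hom C A B f \<longrightarrow> hom C D E g \<longrightarrow>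
        Comp C (Sym C B E) (MT C f g) = Comp C (MT C g f) (Sym C A D)) \<and>
    (\<forall>A B. Obj C A \<longrightarrow> Obj C B \<longrightarrow> Comp C (Sym C B A) (Sym C A B) = Id C (OT C A B)) \<and>
    (\<forall>A B D. Obj C A \<longrightarrow> Obj C B \<longrightarrow> Obj C D \<longrightarrow>
        Sym C A (OT C B D) = Comp C (MT C (Id C B) (Sym C A D)) (MT C (Sym C A B) (Id C D)))"

definition is_monoid :: "('o, 'm, 'z) smc_scheme \<Rightarrow> 'o \<Rightarrow> 'm \<Rightarrow> 'm \<Rightarrow> bool" where
  "is_monoid C H m u \<longleftrightarrow> Obj C H \<and>
    hom C (OT C H H) H m \<and> hom C (Unit C) H u \<and>
    Comp C m (MT C m (Id C H)) = Comp C m (MT C (Id C H) m) \<and>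
    Comp C m (MT C u (Id C H)) = Id C H \<and>
    Comp C m (MT C (Id C H) u) = Id C H"

definition is_comonoid :: "('o, 'm, 'z) smc_scheme \<Rightarrow> 'o \<Rightarrow> 'm \<Rightarrow> 'm \<Rightarrow> bool" where
  "is_comonoid C H d e \<longleftrightarrow> Obj C H \<and>
    hom C H (OT C H H) d \<and> hom C H (Unit C) e \<and>
    Comp C (MT C d (Id C H)) d = Comp C (MT C (Id C H) d) d \<and>
    Comp C (MT C e (Id C H)) d = Id C H \<and>
    Comp C (MT C (Id C H) e) d = Id C H"

definition is_hopf :: "('o, 'm, 'z) smc_scheme \<Rightarrow> 'o \<Rightarrow> 'm \<Rightarrow> 'm \<Rightarrow> 'm \<Rightarrow> 'm \<Rightarrow> 'm \<Rightarrow> bool" where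
  "is_hopf C H mu eta delta eps s \<longleftrightarrow>
    is_monoid C H mu eta \<and> is_comonoid C H delta eps \<and>
    Comp C delta mu =
      Comp C (MT C mu mu) (Comp C (MT C (Id C H) (MT C (Sym C H H) (Id C H))) (MT C delta delta)) \<and>
    Comp C delta eta = MT C eta eta \<and>
    Comp C eps mu = MT C eps eps \<and>
    Comp C eps eta = Id C (Unit C) \<and>
    hom C H H s \<and>
    Comp C mu (Comp C (MT C s (Id C H)) delta) = Comp C eta eps \<and>
    Comp C mu (Comp C (MT C (Id C H) s) delta) = Comp C eta eps"

definition is_left_cointegral :: "('o, 'm, 'z) smc_scheme \<Rightarrow> 'o \<Rightarrow> 'm \<Rightarrow> 'm \<Rightarrow> 'm \<Rightarrow> bool" where
  "is_left_cointegral C H mu eps Lam \<longleftrightarrow> hom C (Unit C) H Lam \<and>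
    Comp C mu (MT C Lam (Id C H)) = Comp C Lam eps"

definition is_right_integral :: "('o, 'm, 'z) smc_scheme \<Rightarrow> 'o \<Rightarrow> 'm \<Rightarrow> 'm \<Rightarrow> 'm \<Rightarrow> bool" where
  "is_right_integral C H eta delta lam \<longleftrightarrow> hom C H (Unit C) lam \<and>
    Comp C (MT C (Id C H) lam) delta = Comp C eta lam"

definition is_integral_hopf ::
  "('o, 'm, 'z) smc_scheme \<Rightarrow> 'o \<Rightarrow> 'm \<Rightarrow> 'm \<Rightarrow> 'm \<Rightarrow> 'm \<Rightarrow> 'm \<Rightarrow> 'm \<Rightarrow> 'm \<Rightarrow> bool" where
  "is_integral_hopf C H mu eta delta eps s Lam lam \<longleftrightarrow>
    is_hopf C H mu eta delta eps s \<and>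
    is_left_cointegral C H mu eps Lam \<and> is_right_integral C H eta delta lam \<and>
    Comp C lam Lam = Id C (Unit C)"

definition monoid_frobenius_form :: "('o, 'm, 'z) smc_scheme \<Rightarrow> 'o \<Rightarrow> 'm \<Rightarrow> 'm \<Rightarrow> 'm \<Rightarrow> bool" where
  "monoid_frobenius_form C F m u \<beta> \<longleftrightarrow> hom C (OT C F F) (Unit C) \<beta> \<and>
    Comp C \<beta> (MT C m (Id C F)) = Comp C \<beta> (MT C (Id C F) m) \<and>
    (\<exists>\<beta>'. hom C (Unit C) (OT C F F) \<beta>' \<and>
       Comp C (MT C (Id C F) \<beta>) (MT C \<beta>' (Id C F)) = Id C F \<and>
       Comp C (MT C \<beta> (Id C F)) (MT C (Id C F) \<beta>') = Id C F)"

definition comonoid_frobenius_form :: "('o, 'm, 'z) smc_scheme \<Rightarrow> 'o \<Rightarrow> 'm \<Rightarrow> 'm \<Rightarrow> 'm \<Rightarrow> bool" where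
  "comonoid_frobenius_form C F d e \<gamma> \<longleftrightarrow> hom C (Unit C) (OT C F F) \<gamma> \<and>
    Comp C (MT C d (Id C F)) \<gamma> = Comp C (MT C (Id C F) d) \<gamma> \<and>
    (\<exists>\<gamma>'. hom C (OT C F F) (Unit C) \<gamma>' \<and>
       Comp C (MT C (Id C F) \<gamma>') (MT C \<gamma> (Id C F)) = Id C F \<and>
       Comp C (MT C \<gamma>' (Id C F)) (MT C (Id C F) \<gamma>) = Id C F)"

definition is_frobenius_algebra :: "('o, 'm, 'z) smc_scheme \<Rightarrow> 'o \<Rightarrow> 'm \<Rightarrow> 'm \<Rightarrow> 'm \<Rightarrow> 'm \<Rightarrow> bool" where
  "is_frobenius_algebra C H m u d c \<longleftrightarrow> is_monoid C H m u \<and> is_comonoid C H d c \<and>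
    Comp C (MT C (Id C H) m) (MT C d (Id C H)) = Comp C d m \<and>
    Comp C d m = Comp C (MT C m (Id C H)) (MT C (Id C H) d)"

definition is_pre_hopf_frobenius ::
  "('o, 'm, 'z) smc_scheme \<Rightarrow> 'o \<Rightarrow> 'm \<Rightarrow> 'm \<Rightarrow> 'm \<Rightarrow> 'm \<Rightarrow> 'm \<Rightarrow> 'm \<Rightarrow> 'm \<Rightarrow> 'm \<Rightarrow> 'm \<Rightarrow> bool" where
  "is_pre_hopf_frobenius C H mu_g eta_g delta_g eps_g mu_r eta_r delta_r eps_r s \<longleftrightarrow>
    is_frobenius_algebra C H mu_g eta_g delta_g eps_g \<and>
    is_frobenius_algebra C H mu_r eta_r delta_r eps_r \<and>
    is_hopf C H mu_g eta_g delta_r eps_r s"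

end

theory Submission
  imports Defs
begin


definition smc0 :: "('o, 'm, 'z) smc_scheme \<Rightarrow> bool" where
  "smc0 C \<longleftrightarrow>
    (\<forall>f. Arr C f \<longrightarrow> Obj C (Dom C f) \<and> Obj C (Cod C f)) \<and>
    (\<forall>A. Obj C A \<longrightarrow> hom C A A (Id C A)) \<and>
    (\<forall>A B D f g. hom C A B f \<longrightarrow> hom C B D g \<longrightarrow> hom C A D (Comp C g f)) \<and>
    (\<forall>A B f. hom C A B f \<longrightarrow> Comp C (Id C B) f = f \<and> Comp C f (Id C A) = f) \<and>
    (\<forall>A B D E f g h. hom C A B f \<longrightarrow> hom C B D g \<longrightarrow> hom C D E h \<longrightarrow>
        Comp C h (Comp C g f) = Comp C (Comp C h g) f) \<and>
    Obj C (Unit C) \<and>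
    (\<forall>A B. Obj C A \<longrightarrow> Obj C B \<longrightarrow> Obj C (OT C A B)) \<and>
    (\<forall>A B D E f g. hom C A B f \<longrightarrow> hom C D E g \<longrightarrow> hom C (OT C A D) (OT C B E) (MT C f g)) \<and>
    (\<forall>A B. Obj C A \<longrightarrow> Obj C B \<longrightarrow> MT C (Id C A) (Id C B) = Id C (OT C A B)) \<and>
    (\<forall>A B D A' B' D' f g f' g'. hom C A B f \<longrightarrow> hom C B D g \<longrightarrow>
        hom C A' B' f' \<longrightarrow> hom C B' D' g' \<longrightarrow>
        MT C (Comp C g f) (Comp C g' f') = Comp C (MT C g g') (MT C f f')) \<and>
    (\<forall>A B D. Obj C A \<longrightarrow> Obj C B \<longrightarrow> Obj C D \<longrightarrow> OT C (OT C A B) D = OT C A (OT C B D)) \<and>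
    (\<forall>A. Obj C A \<longrightarrow> OT C (Unit C) A = A \<and> OT C A (Unit C) = A) \<and>
    (\<forall>f g h. Arr C f \<longrightarrow> Arr C g \<longrightarrow> Arr C h \<longrightarrow> MT C (MT C f g) h = MT C f (MT C g h)) \<and>
    (\<forall>f. Arr C f \<longrightarrow> MT C (Id C (Unit C)) f = f \<and> MT C f (Id C (Unit C)) = f)"

definition smc1 :: "('o, 'm, 'z) smc_scheme \<Rightarrow> bool" where
  "smc1 C \<longleftrightarrow> smc0 C \<and>
    (\<forall>A B. Obj C A \<longrightarrow> Obj C B \<longrightarrow> hom C (OT C A B) (OT C B A) (Sym C A B)) \<and>
    (\<forall>A B D E f g. hom C A B f \<longrightarrow> hom C D E g \<longrightarrow>
        Comp C (Sym C B E) (MT C f g) = Comp C (MT C g f) (Sym C A D)) \<and>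
    (\<forall>A. Obj C A \<longrightarrow> Sym C (Unit C) A = Id C A)"

lemma strict_smc_eq: "strict_smc C \<longleftrightarrow> smc0 C \<and>
    ((\<forall>A B. Obj C A \<longrightarrow> Obj C B \<longrightarrow> hom C (OT C A B) (OT C B A) (Sym C A B)) \<and>
    (\<forall>A B D E f g. hom C A B f \<longrightarrow> hom C D E g \<longrightarrow>
        Comp C (Sym C B E) (MT C f g) = Comp C (MT C g f) (Sym C A D)) \<and>
    (\<forall>A B. Obj C A \<longrightarrow> Obj C B \<longrightarrow> Comp C (Sym C B A) (Sym C A B) = Id C (OT C A B)) \<and>
    (\<forall>A B D. Obj C A \<longrightarrow> Obj C B \<longrightarrow> Obj C D \<longrightarrow>
        Sym C A (OT C B D) = Comp C (MT C (Id C B) (Sym C A D)) (MT C (Sym C A B) (Id C D))))"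
    unfolding strict_smc_def smc0_def by (simp only: conj_assoc)

locale smc0_loc =
  fixes C :: "('o, 'm, 'z) smc_scheme"
  assumes smc0: "smc0 C"
begin

lemmas c = smc0[unfolded smc0_def]
lemmas ax_objdom = c[THEN conjunct1, rule_format]
lemmas ax_id = c[THEN conjunct2, THEN conjunct1, rule_format]
lemmas ax_comp = c[THEN conjunct2, THEN conjunct2, THEN conjunct1, rule_format]
lemmas ax_idlr = c[THEN conjunct2, THEN conjunct2, THEN conjunct2, THEN conjunct1, rule_format]
lemmas ax_assoc = c[THEN conjunct2, THEN conjunct2, THEN conjunct2, THEN conjunct2, THEN conjunct1, rule_format]
lemmas c5 = c[THEN conjunct2, THEN conjunct2, THEN conjunct2, THEN conjunct2, THEN conjunct2]
lemmas ax_unit = c5[THEN conjunct1]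
lemmas ax_OT = c5[THEN conjunct2, THEN conjunct1, rule_format]
lemmas ax_MT = c5[THEN conjunct2, THEN conjunct2, THEN conjunct1, rule_format]
lemmas ax_MTid = c5[THEN conjunct2, THEN conjunct2, THEN conjunct2, THEN conjunct1, rule_format]
lemmas ax_inter = c5[THEN conjunct2, THEN conjunct2, THEN conjunct2, THEN conjunct2, THEN conjunct1, rule_format]
lemmas c10 = c5[THEN conjunct2, THEN conjunct2, THEN conjunct2, THEN conjunct2, THEN conjunct2]
lemmas ax_OTassoc = c10[THEN conjunct1, rule_format]
lemmas ax_OTunit = c10[THEN conjunct2, THEN conjunct1, rule_format]
lemmas ax_MTassoc = c10[THEN conjunct2, THEN conjunct2, THEN conjunct1, rule_format]
lemmas ax_MTunit = c10[THEN conjunct2, THEN conjunct2, THEN conjunct2, rule_format]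

end

lemma strict_smc_smc1:
  assumes "strict_smc C" shows "smc1 C"
proof -
  note A = iffD1[OF strict_smc_eq assms]
  have s0: "smc0 C" using A by (rule conjunct1)
  interpret smc0_loc C by (rule smc0_loc.intro[OF s0])
  note ax = A[THEN conjunct2, THEN conjunct1, rule_format]
  note inv = A[THEN conjunct2, THEN conjunct2, THEN conjunct2, THEN conjunct1, rule_format]
  note hex = A[THEN conjunct2, THEN conjunct2, THEN conjunct2, THEN conjunct2, rule_format]
  note un = ax_unit and ot = ax_OTunit and mtu = ax_MTunit and idl = ax_idlr and ca = ax_assoc
  have "Sym C (Unit C) A = Id C A" if A: "Obj C A" for A
  proof -
    let ?x = "Sym C A (Unit C)" and ?y = "Sym C (Unit C) A"
    have hx: "hom C A A ?x" using ax[OF A un] ot[OF A] by simp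
    have hy: "hom C A A ?y" using ax[OF un A] ot[OF A] by simp
    have "?x = Sym C A (OT C (Unit C) (Unit C))" using ot[OF un] by simp
    also have "\<dots> = Comp C (MT C (Id C (Unit C)) ?x) (MT C ?x (Id C (Unit C)))"
      by (rule hex[OF A un un])
    also have "\<dots> = Comp C ?x ?x" using mtu hx unfolding hom_def by simp
    finally have xx: "?x = Comp C ?x ?x" .
    have yx: "Comp C ?y ?x = Id C A" using inv[OF A un] ot[OF A] by simp
    have "?x = Comp C (Comp C ?y ?x) ?x" using yx idl[OF hx] by simp
    also have "\<dots> = Comp C ?y (Comp C ?x ?x)" using ca[OF hx hx hy] by simp
    also have "\<dots> = Id C A" using xx yx by simp
    finally have x1: "?x = Id C A" .
    have "?y = Comp C ?y ?x" using x1 idl[OF hy] by simp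
    also have "\<dots> = Id C A" by (rule yx)
    finally show ?thesis .
  qed
  then show ?thesis unfolding smc1_def using s0 ax A[THEN conjunct2, THEN conjunct2, THEN conjunct1]
    by blast
qed

definition dual :: "('o, 'm, 'z) smc_scheme \<Rightarrow> ('o, 'm) smc" where
  "dual C = \<lparr>Obj = Obj C, Arr = Arr C, Dom = Cod C, Cod = Dom C,
     Comp = (\<lambda>g f. Comp C f g), Id = Id C, OT = (\<lambda>A B. OT C B A), MT = (\<lambda>f g. MT C g f),
     Unit = Unit C, Sym = Sym C\<rparr>"

lemma dual_simps[simp]:
  "Obj (dual C) = Obj C" "Arr (dual C) = Arr C" "Dom (dual C) = Cod C" "Cod (dual C) = Dom C"
  "Comp (dual C) g f = Comp C f g" "Id (dual C) = Id C" "OT (dual C) A B = OT C B A"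
  "MT (dual C) f g = MT C g f" "Unit (dual C) = Unit C" "Sym (dual C) = Sym C"
  by (simp_all add: dual_def)

lemma hom_dual[simp]: "hom (dual C) A B f = hom C B A f"
  by (auto simp: hom_def)


context smc0_loc begin
lemma smc0_dual: "smc0 (dual C)"
  unfolding smc0_def hom_dual dual_simps
  apply (intro conjI allI impI)
  subgoal using ax_objdom by blast
  subgoal using ax_objdom by blast
  subgoal by (rule ax_id)
  subgoal for A B D f g by (rule ax_comp)
  subgoal using ax_idlr by blast
  subgoal using ax_idlr by blast
  subgoal for A B D E f g h by (rule ax_assoc[symmetric])
  subgoal by (rule ax_unit)
  subgoal by (rule ax_OT)
  subgoal by (rule ax_MT)
  subgoal by (rule ax_MTid)
  subgoal by (rule ax_inter)
  subgoal by (rule ax_OTassoc[symmetric])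
  subgoal using ax_OTunit by blast
  subgoal using ax_OTunit by blast
  subgoal by (rule ax_MTassoc[symmetric])
  subgoal using ax_MTunit by blast
  subgoal using ax_MTunit by blast
  done
end

lemma smc1_dual: assumes "smc1 C" shows "smc1 (dual C)"
proof -
  have s0: "smc0 C" using assms unfolding smc1_def by (rule conjunct1)
  interpret smc0_loc C by (rule smc0_loc.intro[OF s0])
  note A = assms[unfolded smc1_def]
  note sy = A[THEN conjunct2, THEN conjunct1, rule_format]
  note nat = A[THEN conjunct2, THEN conjunct2, THEN conjunct1, rule_format]
  note su = A[THEN conjunct2, THEN conjunct2, THEN conjunct2, rule_format]
  show ?thesis unfolding smc1_def hom_dual dual_simps
    apply (intro conjI allI impI)
    subgoal by (rule smc0_dual)
    subgoal by (rule sy)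
    subgoal for A B D E f g by (rule nat[symmetric])
    subgoal by (rule su)
    done
qed


context smc0_loc begin

lemma hom_iff: "hom C A B f \<longleftrightarrow> Arr C f \<and> Dom C f = A \<and> Cod C f = B"
  by (simp add: hom_def)

lemma arr_comp[simp]: "Arr C f \<Longrightarrow> Arr C g \<Longrightarrow> Dom C g = Cod C f \<Longrightarrow> Arr C (Comp C g f)"
  using ax_comp[of "Dom C f" "Cod C f" f "Cod C g" g] by (simp add: hom_iff)
lemma dom_comp[simp]: "Arr C f \<Longrightarrow> Arr C g \<Longrightarrow> Dom C g = Cod C f \<Longrightarrow> Dom C (Comp C g f) = Dom C f"
  using ax_comp[of "Dom C f" "Cod C f" f "Cod C g" g] by (simp add: hom_iff)
lemma cod_comp[simp]: "Arr C f \<Longrightarrow> Arr C g \<Longrightarrow> Dom C g = Cod C f \<Longrightarrow> Cod C (Comp C g f) = Cod C g"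
  using ax_comp[of "Dom C f" "Cod C f" f "Cod C g" g] by (simp add: hom_iff)
lemma arr_MT[simp]: "Arr C f \<Longrightarrow> Arr C g \<Longrightarrow> Arr C (MT C f g)"
  using ax_MT[of "Dom C f" "Cod C f" f "Dom C g" "Cod C g" g] by (simp add: hom_iff)
lemma dom_MT[simp]: "Arr C f \<Longrightarrow> Arr C g \<Longrightarrow> Dom C (MT C f g) = OT C (Dom C f) (Dom C g)"
  using ax_MT[of "Dom C f" "Cod C f" f "Dom C g" "Cod C g" g] by (simp add: hom_iff)
lemma cod_MT[simp]: "Arr C f \<Longrightarrow> Arr C g \<Longrightarrow> Cod C (MT C f g) = OT C (Cod C f) (Cod C g)"
  using ax_MT[of "Dom C f" "Cod C f" f "Dom C g" "Cod C g" g] by (simp add: hom_iff)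
lemma arr_Id[simp]: "Obj C A \<Longrightarrow> Arr C (Id C A)"
  using ax_id[of A] by (simp add: hom_iff)
lemma dom_Id[simp]: "Obj C A \<Longrightarrow> Dom C (Id C A) = A"
  using ax_id[of A] by (simp add: hom_iff)
lemma cod_Id[simp]: "Obj C A \<Longrightarrow> Cod C (Id C A) = A"
  using ax_id[of A] by (simp add: hom_iff)
lemma obj_dom[simp]: "Arr C f \<Longrightarrow> Obj C (Dom C f)"
  using ax_objdom by blast
lemma obj_cod[simp]: "Arr C f \<Longrightarrow> Obj C (Cod C f)"
  using ax_objdom by blast
lemma obj_OT[simp]: "Obj C A \<Longrightarrow> Obj C B \<Longrightarrow> Obj C (OT C A B)"
  by (rule ax_OT)
lemma obj_unit[simp]: "Obj C (Unit C)"
  by (rule ax_unit)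
lemma OT_assoc[simp]: "Obj C A \<Longrightarrow> Obj C B \<Longrightarrow> Obj C D \<Longrightarrow> OT C (OT C A B) D = OT C A (OT C B D)"
  by (rule ax_OTassoc)
lemma OT_unit_l[simp]: "Obj C A \<Longrightarrow> OT C (Unit C) A = A"
  using ax_OTunit by blast
lemma OT_unit_r[simp]: "Obj C A \<Longrightarrow> OT C A (Unit C) = A"
  using ax_OTunit by blast

lemma comp_assoc: "Arr C f \<Longrightarrow> Arr C g \<Longrightarrow> Arr C h \<Longrightarrow> Dom C g = Cod C f \<Longrightarrow> Dom C h = Cod C g \<Longrightarrow>
   Comp C (Comp C h g) f = Comp C h (Comp C g f)"
  using ax_assoc[of "Dom C f" "Cod C f" f "Cod C g" g "Cod C h" h] by (simp add: hom_iff)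
lemma id_left: "Arr C f \<Longrightarrow> Cod C f = A \<Longrightarrow> Comp C (Id C A) f = f"
  using ax_idlr[of "Dom C f" "Cod C f" f] by (simp add: hom_iff)
lemma id_right: "Arr C f \<Longrightarrow> Dom C f = A \<Longrightarrow> Comp C f (Id C A) = f"
  using ax_idlr[of "Dom C f" "Cod C f" f] by (simp add: hom_iff)
lemma inter: "Arr C f \<Longrightarrow> Arr C g \<Longrightarrow> Arr C f' \<Longrightarrow> Arr C g' \<Longrightarrow> Dom C g = Cod C f \<Longrightarrow> Dom C g' = Cod C f' \<Longrightarrow>
   Comp C (MT C g g') (MT C f f') = MT C (Comp C g f) (Comp C g' f')"
  using ax_inter[of "Dom C f" "Cod C f" f "Cod C g" g "Dom C f'" "Cod C f'" f' "Cod C g'" g'] by (simp add: hom_iff)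
lemma MT_assoc: "Arr C f \<Longrightarrow> Arr C g \<Longrightarrow> Arr C h \<Longrightarrow> MT C (MT C f g) h = MT C f (MT C g h)"
  by (rule ax_MTassoc)
lemma MT_Id: "Obj C A \<Longrightarrow> Obj C B \<Longrightarrow> MT C (Id C A) (Id C B) = Id C (OT C A B)"
  by (rule ax_MTid)
lemma MT_unit_l: "Arr C f \<Longrightarrow> MT C (Id C (Unit C)) f = f"
  using ax_MTunit by blast
lemma MT_unit_r: "Arr C f \<Longrightarrow> MT C f (Id C (Unit C)) = f"
  using ax_MTunit by blast

lemma inter_k: "Arr C f \<Longrightarrow> Arr C g \<Longrightarrow> Arr C f' \<Longrightarrow> Arr C g' \<Longrightarrow> Dom C g = Cod C f \<Longrightarrow> Dom C g' = Cod C f' \<Longrightarrow>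
   Arr C k \<Longrightarrow> OT C (Dom C f) (Dom C f') = Cod C k \<Longrightarrow>
   Comp C (MT C g g') (Comp C (MT C f f') k) = Comp C (MT C (Comp C g f) (Comp C g' f')) k"
  by (subst comp_assoc[symmetric]) (simp_all add: inter)

lemma inter3a: "Arr C f1 \<Longrightarrow> Arr C f2 \<Longrightarrow> Arr C f3 \<Longrightarrow> Arr C g \<Longrightarrow> Arr C g' \<Longrightarrow>
   Dom C g = OT C (Cod C f1) (Cod C f2) \<Longrightarrow> Dom C g' = Cod C f3 \<Longrightarrow>
   Comp C (MT C g g') (MT C f1 (MT C f2 f3)) = MT C (Comp C g (MT C f1 f2)) (Comp C g' f3)"
  by (simp add: MT_assoc[symmetric] inter)
lemma inter3b: "Arr C g1 \<Longrightarrow> Arr C g2 \<Longrightarrow> Arr C g3 \<Longrightarrow> Arr C f \<Longrightarrow> Arr C f' \<Longrightarrow>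
   Cod C f = OT C (Dom C g1) (Dom C g2) \<Longrightarrow> Cod C f' = Dom C g3 \<Longrightarrow>
   Comp C (MT C g1 (MT C g2 g3)) (MT C f f') = MT C (Comp C (MT C g1 g2) f) (Comp C g3 f')"
  by (simp add: MT_assoc[symmetric] inter)

end

context smc0_loc begin
lemma inter3a_k: "Arr C f1 \<Longrightarrow> Arr C f2 \<Longrightarrow> Arr C f3 \<Longrightarrow> Arr C g \<Longrightarrow> Arr C g' \<Longrightarrow>
   Dom C g = OT C (Cod C f1) (Cod C f2) \<Longrightarrow> Dom C g' = Cod C f3 \<Longrightarrow>
   Arr C k \<Longrightarrow> OT C (Dom C f1) (OT C (Dom C f2) (Dom C f3)) = Cod C k \<Longrightarrow>
   Comp C (MT C g g') (Comp C (MT C f1 (MT C f2 f3)) k) = Comp C (MT C (Comp C g (MT C f1 f2)) (Comp C g' f3)) k"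
  by (subst comp_assoc[symmetric]) (simp_all add: inter3a)
lemma inter3b_k: "Arr C g1 \<Longrightarrow> Arr C g2 \<Longrightarrow> Arr C g3 \<Longrightarrow> Arr C f \<Longrightarrow> Arr C f' \<Longrightarrow>
   Cod C f = OT C (Dom C g1) (Dom C g2) \<Longrightarrow> Cod C f' = Dom C g3 \<Longrightarrow>
   Arr C k \<Longrightarrow> OT C (Dom C f) (Dom C f') = Cod C k \<Longrightarrow>
   Comp C (MT C g1 (MT C g2 g3)) (Comp C (MT C f f') k) = Comp C (MT C (Comp C (MT C g1 g2) f) (Comp C g3 f')) k"
  by (subst comp_assoc[symmetric]) (simp_all add: inter3b)
lemma id_left_k: "Arr C f \<Longrightarrow> Cod C f = A \<Longrightarrow> Arr C k \<Longrightarrow> Dom C f = Cod C k \<Longrightarrow> Comp C (Id C A) (Comp C f k) = Comp C f k"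
  by (simp add: id_left)

lemma comp_k: "Comp C a b = c \<Longrightarrow> Arr C a \<Longrightarrow> Arr C b \<Longrightarrow> Arr C k \<Longrightarrow> Dom C a = Cod C b \<Longrightarrow> Dom C b = Cod C k \<Longrightarrow>
   Comp C a (Comp C b k) = Comp C c k"
  by (simp add: comp_assoc[symmetric])

lemma MT_Id3: "Obj C A \<Longrightarrow> Obj C B \<Longrightarrow> Arr C f \<Longrightarrow> MT C (Id C A) (MT C (Id C B) f) = MT C (Id C (OT C A B)) f"
  by (simp add: MT_assoc[symmetric] MT_Id)
lemma split_l: "Obj C A \<Longrightarrow> Obj C B \<Longrightarrow> Arr C f \<Longrightarrow> Arr C g \<Longrightarrow> Dom C g = OT C B (Cod C f) \<Longrightarrow>
  Comp C (MT C (Id C A) g) (MT C (Id C (OT C A B)) f) = MT C (Id C A) (Comp C g (MT C (Id C B) f))"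
  by (simp add: MT_Id[symmetric] MT_assoc inter id_left)
lemma split_r: "Obj C A \<Longrightarrow> Obj C B \<Longrightarrow> Arr C f \<Longrightarrow> Arr C g \<Longrightarrow> Cod C f = OT C B (Dom C g) \<Longrightarrow>
  Comp C (MT C (Id C (OT C A B)) g) (MT C (Id C A) f) = MT C (Id C A) (Comp C (MT C (Id C B) g) f)"
  by (simp add: MT_Id[symmetric] MT_assoc inter id_left)
lemma split_l_k: "Obj C A \<Longrightarrow> Obj C B \<Longrightarrow> Arr C f \<Longrightarrow> Arr C g \<Longrightarrow> Dom C g = OT C B (Cod C f) \<Longrightarrow>
  Arr C k \<Longrightarrow> Cod C k = OT C A (OT C B (Dom C f)) \<Longrightarrow>
  Comp C (MT C (Id C A) g) (Comp C (MT C (Id C (OT C A B)) f) k) = Comp C (MT C (Id C A) (Comp C g (MT C (Id C B) f))) k"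
  by (subst comp_assoc[symmetric]) (simp_all add: split_l)
lemma split_r_k: "Obj C A \<Longrightarrow> Obj C B \<Longrightarrow> Arr C f \<Longrightarrow> Arr C g \<Longrightarrow> Cod C f = OT C B (Dom C g) \<Longrightarrow>
  Arr C k \<Longrightarrow> Cod C k = OT C A (Dom C f) \<Longrightarrow>
  Comp C (MT C (Id C (OT C A B)) g) (Comp C (MT C (Id C A) f) k) = Comp C (MT C (Id C A) (Comp C (MT C (Id C B) g) f)) k"
  by (subst comp_assoc[symmetric]) (simp_all add: split_r)

lemma idl2: "Obj C A \<Longrightarrow> Obj C B \<Longrightarrow> Arr C f \<Longrightarrow> Cod C f = OT C A B \<Longrightarrow> Comp C (MT C (Id C A) (Id C B)) f = f"
  by (simp add: MT_Id id_left)
lemma idr2: "Obj C A \<Longrightarrow> Obj C B \<Longrightarrow> Arr C f \<Longrightarrow> Dom C f = OT C A B \<Longrightarrow> Comp C f (MT C (Id C A) (Id C B)) = f"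
  by (simp add: MT_Id id_right)
lemma idl3: "Obj C A \<Longrightarrow> Obj C B \<Longrightarrow> Obj C D \<Longrightarrow> Arr C f \<Longrightarrow> Cod C f = OT C A (OT C B D) \<Longrightarrow> Comp C (MT C (Id C A) (MT C (Id C B) (Id C D))) f = f"
  by (simp add: MT_Id id_left)
lemma idr3: "Obj C A \<Longrightarrow> Obj C B \<Longrightarrow> Obj C D \<Longrightarrow> Arr C f \<Longrightarrow> Dom C f = OT C A (OT C B D) \<Longrightarrow> Comp C f (MT C (Id C A) (MT C (Id C B) (Id C D))) = f"
  by (simp add: MT_Id id_right)
lemma idl2_k: "Obj C A \<Longrightarrow> Obj C B \<Longrightarrow> Arr C f \<Longrightarrow> Cod C f = OT C A B \<Longrightarrow> Arr C k \<Longrightarrow> Dom C f = Cod C k \<Longrightarrow>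
   Comp C (MT C (Id C A) (Id C B)) (Comp C f k) = Comp C f k"
  by (simp add: MT_Id id_left)
lemma idl3_k: "Obj C A \<Longrightarrow> Obj C B \<Longrightarrow> Obj C D \<Longrightarrow> Arr C f \<Longrightarrow> Cod C f = OT C A (OT C B D) \<Longrightarrow> Arr C k \<Longrightarrow> Dom C f = Cod C k \<Longrightarrow>
   Comp C (MT C (Id C A) (MT C (Id C B) (Id C D))) (Comp C f k) = Comp C f k"
  by (simp add: MT_Id id_left)
lemma sp1: "Arr C p \<Longrightarrow> Arr C g \<Longrightarrow> Arr C f \<Longrightarrow> Dom C p = Unit C \<Longrightarrow> Dom C g = Cod C f \<Longrightarrow>
   Comp C (MT C p g) f = MT C p (Comp C g f)"
  using inter[of "Id C (Unit C)" p f g] by (simp add: id_right MT_unit_l)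
lemma sp2: "Arr C p \<Longrightarrow> Arr C g \<Longrightarrow> Arr C f \<Longrightarrow> Dom C p = Unit C \<Longrightarrow> Dom C g = Cod C f \<Longrightarrow>
   Comp C (MT C g p) f = MT C (Comp C g f) p"
  using inter[of f g "Id C (Unit C)" p] by (simp add: id_right MT_unit_r)
lemma sp1_k: "Arr C p \<Longrightarrow> Arr C g \<Longrightarrow> Arr C f \<Longrightarrow> Dom C p = Unit C \<Longrightarrow> Dom C g = Cod C f \<Longrightarrow> Arr C k \<Longrightarrow> Dom C f = Cod C k \<Longrightarrow>
   Comp C (MT C p g) (Comp C f k) = Comp C (MT C p (Comp C g f)) k"
  by (subst comp_assoc[symmetric]) (simp_all add: sp1)
lemma sp2_k: "Arr C p \<Longrightarrow> Arr C g \<Longrightarrow> Arr C f \<Longrightarrow> Dom C p = Unit C \<Longrightarrow> Dom C g = Cod C f \<Longrightarrow> Arr C k \<Longrightarrow> Dom C f = Cod C k \<Longrightarrow>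
   Comp C (MT C g p) (Comp C f k) = Comp C (MT C (Comp C g f) p) k"
  by (subst comp_assoc[symmetric]) (simp_all add: sp2)

lemma eps1: "Arr C f \<Longrightarrow> Arr C g \<Longrightarrow> Arr C w \<Longrightarrow> Dom C f = Cod C g \<Longrightarrow> Cod C w = Unit C \<Longrightarrow>
   Comp C f (MT C w g) = MT C w (Comp C f g)"
  using inter[of w "Id C (Unit C)" g f] by (simp add: id_left id_right MT_unit_l)
lemma eps2: "Arr C f \<Longrightarrow> Arr C g \<Longrightarrow> Arr C w \<Longrightarrow> Dom C f = Cod C g \<Longrightarrow> Cod C w = Unit C \<Longrightarrow>
   Comp C f (MT C g w) = MT C (Comp C f g) w"
  using inter[of g f w "Id C (Unit C)"] by (simp add: id_left id_right MT_unit_r)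
lemma eps1_k: "Arr C f \<Longrightarrow> Arr C g \<Longrightarrow> Arr C w \<Longrightarrow> Dom C f = Cod C g \<Longrightarrow> Cod C w = Unit C \<Longrightarrow> Arr C k \<Longrightarrow> OT C (Dom C w) (Dom C g) = Cod C k \<Longrightarrow>
   Comp C f (Comp C (MT C w g) k) = Comp C (MT C w (Comp C f g)) k"
  by (subst comp_assoc[symmetric]) (simp_all add: eps1)
lemma eps2_k: "Arr C f \<Longrightarrow> Arr C g \<Longrightarrow> Arr C w \<Longrightarrow> Dom C f = Cod C g \<Longrightarrow> Cod C w = Unit C \<Longrightarrow> Arr C k \<Longrightarrow> OT C (Dom C g) (Dom C w) = Cod C k \<Longrightarrow>
   Comp C f (Comp C (MT C g w) k) = Comp C (MT C (Comp C f g) w) k"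
  by (subst comp_assoc[symmetric]) (simp_all add: eps2)
lemmas nrm = idl2 idr2 idl3 idr3 idl2_k idl3_k sp1 sp2 sp1_k sp2_k id_left_k comp_assoc id_left id_right inter inter_k inter3a inter3b inter3a_k inter3b_k MT_assoc MT_unit_l MT_unit_r
end

context smc0_loc begin
lemmas nrmF = nrm eps1 eps2 eps1_k eps2_k
lemmas nrmL = MT_assoc[symmetric] inter inter_k id_left id_right id_left_k idl2 idr2 comp_assoc idl2_k MT_unit_l MT_unit_r

fun cseq :: "'m list \<Rightarrow> 'm" where
  "cseq [] = undefined"
| "cseq [x] = x"
| "cseq (x # y # zs) = Comp C x (cseq (y # zs))"

fun tc :: "'m list \<Rightarrow> bool" where
  "tc [] = False"
| "tc [x] = Arr C x"
| "tc (x # y # zs) = (Arr C x \<and> Dom C x = Cod C y \<and> tc (y # zs))"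

declare cseq.simps(2,3)[simp del]

lemma tc_props: "tc xs \<Longrightarrow> Arr C (cseq xs) \<and> Dom C (cseq xs) = Dom C (last xs) \<and> Cod C (cseq xs) = Cod C (hd xs)"
proof (induction xs rule: tc.induct)
  case (3 x y zs)
  then show ?case by (simp add: cseq.simps)
qed (simp_all add: cseq.simps)

lemma tc_app: "tc (xs @ ys) \<longleftrightarrow> (xs = [] \<longrightarrow> tc ys) \<and> (ys = [] \<longrightarrow> tc xs) \<and>
   (xs \<noteq> [] \<longrightarrow> ys \<noteq> [] \<longrightarrow> tc xs \<and> tc ys \<and> Dom C (last xs) = Cod C (hd ys))"
proof (induction xs rule: tc.induct)
  case 1 then show ?case by (cases ys) auto
next
  case (2 x) then show ?case by (cases ys) auto
next
  case (3 x y zs) then show ?case by auto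
qed

lemma cseq_app: "tc (xs @ ys) \<Longrightarrow> xs \<noteq> [] \<Longrightarrow> ys \<noteq> [] \<Longrightarrow> cseq (xs @ ys) = Comp C (cseq xs) (cseq ys)"
proof (induction xs rule: tc.induct)
  case 1 then show ?case by simp
next
  case (2 x) then show ?case by (cases ys) (simp_all add: cseq.simps)
next
  case (3 x y zs)
  have t: "tc ((y # zs) @ ys)" using 3(2) by simp
  have "cseq ((x # y # zs) @ ys) = Comp C x (cseq ((y # zs) @ ys))" by (simp add: cseq.simps)
  also have "\<dots> = Comp C x (Comp C (cseq (y # zs)) (cseq ys))" using 3 t by simp
  also have "\<dots> = Comp C (Comp C x (cseq (y # zs))) (cseq ys)"
  proof -
    have a: "tc (y # zs)" "tc ys" "Dom C (last (y#zs)) = Cod C (hd ys)" "Dom C x = Cod C y" "Arr C x"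
      using 3(2,4) unfolding tc_app by auto
    show ?thesis using tc_props[OF a(1)] tc_props[OF a(2)] a
      by (subst comp_assoc) (auto simp: cseq.simps)
  qed
  also have "\<dots> = Comp C (cseq (x # y # zs)) (cseq ys)" by (simp add: cseq.simps)
  finally show ?case .
qed

lemma window: "xs = pre @ w @ suf \<Longrightarrow> ys = pre @ w' @ suf \<Longrightarrow> w \<noteq> [] \<Longrightarrow> w' \<noteq> [] \<Longrightarrow>
   tc xs \<Longrightarrow> tc w' \<Longrightarrow> Dom C (last w') = Dom C (last w) \<Longrightarrow> Cod C (hd w') = Cod C (hd w) \<Longrightarrow>
   cseq w = cseq w' \<Longrightarrow> cseq xs = cseq ys"
proof -
  assume xs: "xs = pre @ w @ suf" and ys: "ys = pre @ w' @ suf" and ne: "w \<noteq> []" "w' \<noteq> []"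
    and t: "tc xs" "tc w'" and dc: "Dom C (last w') = Dom C (last w)" "Cod C (hd w') = Cod C (hd w)"
    and e: "cseq w = cseq w'"
  have tw: "tc (w @ suf)" and tw': "tc w" using t(1) ne unfolding xs tc_app by auto
  have tys: "tc ys" using t ne dc unfolding xs ys tc_app by (cases pre; cases suf) auto
  have ty': "tc (w' @ suf)" using tys ne unfolding ys tc_app by auto
  have 1: "cseq (w @ suf) = cseq (w' @ suf)"
  proof (cases "suf = []")
    case True then show ?thesis using e by simp
  next
    case False
    then show ?thesis using e tw ty' ne by (simp add: cseq_app)
  qed
  show ?thesis
  proof (cases "pre = []")
    case True then show ?thesis using 1 xs ys by simp
  next
    case False
    then show ?thesis using 1 t(1) tys ne unfolding xs ys by (simp add: cseq_app)
  qed
qed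

end

locale frob_loc = smc0_loc C for C :: "('o, 'm, 'z) smc_scheme" +
  fixes X m u be bb
  assumes mon: "is_monoid C X m u"
    and be_ty: "hom C (OT C X X) (Unit C) be"
    and inv: "Comp C be (MT C m (Id C X)) = Comp C be (MT C (Id C X) m)"
    and bb_ty: "hom C (Unit C) (OT C X X) bb"
    and sn1: "Comp C (MT C (Id C X) be) (MT C bb (Id C X)) = Id C X"
    and sn2: "Comp C (MT C be (Id C X)) (MT C (Id C X) bb) = Id C X"
begin
abbreviation cmp (infixr "\<cdot>" 65) where "g \<cdot> f \<equiv> Comp C g f"
abbreviation tns (infixr "\<otimes>" 70) where "f \<otimes> g \<equiv> MT C f g"
abbreviation i where "i \<equiv> Id C X"

lemma objX[simp]: "Obj C X" using mon unfolding is_monoid_def by blast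
lemma m_ty: "hom C (OT C X X) X m" and u_ty: "hom C (Unit C) X u"
  using mon unfolding is_monoid_def by blast+
lemma fty[simp]:
  "Arr C m" "Dom C m = OT C X X" "Cod C m = X"
  "Arr C u" "Dom C u = Unit C" "Cod C u = X"
  "Arr C be" "Dom C be = OT C X X" "Cod C be = Unit C"
  "Arr C bb" "Dom C bb = Unit C" "Cod C bb = OT C X X"
  using m_ty u_ty be_ty bb_ty by (simp_all add: hom_iff)
lemma m_assoc: "m \<cdot> (m \<otimes> i) = m \<cdot> (i \<otimes> m)"
  and m_ul: "m \<cdot> (u \<otimes> i) = i" and m_ur: "m \<cdot> (i \<otimes> u) = i"
  using mon unfolding is_monoid_def by blast+
end

locale hopf_loc = smc0_loc C for C :: "('o, 'm, 'z) smc_scheme" +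
  fixes H mu eta delta eps s Lam lam
  assumes smc1: "smc1 C"
    and ih: "is_integral_hopf C H mu eta delta eps s Lam lam"
begin

abbreviation cmp (infixr "\<cdot>" 65) where "g \<cdot> f \<equiv> Comp C g f"
abbreviation tns (infixr "\<otimes>" 70) where "f \<otimes> g \<equiv> MT C f g"
abbreviation i where "i \<equiv> Id C H"
abbreviation sig where "sig \<equiv> Sym C H H"

lemma objH[simp]: "Obj C H"
  using ih unfolding is_integral_hopf_def is_hopf_def is_monoid_def by blast

lemma ty_mu: "hom C (OT C H H) H mu" and ty_eta: "hom C (Unit C) H eta"
  and ty_delta: "hom C H (OT C H H) delta" and ty_eps: "hom C H (Unit C) eps"
  and ty_s: "hom C H H s" and ty_Lam: "hom C (Unit C) H Lam" and ty_lam: "hom C H (Unit C) lam"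
  using ih unfolding is_integral_hopf_def is_hopf_def is_monoid_def is_comonoid_def
    is_left_cointegral_def is_right_integral_def by blast+

lemma ty_simps[simp]:
  "Arr C mu" "Dom C mu = OT C H H" "Cod C mu = H"
  "Arr C eta" "Dom C eta = Unit C" "Cod C eta = H"
  "Arr C delta" "Dom C delta = H" "Cod C delta = OT C H H"
  "Arr C eps" "Dom C eps = H" "Cod C eps = Unit C"
  "Arr C s" "Dom C s = H" "Cod C s = H"
  "Arr C Lam" "Dom C Lam = Unit C" "Cod C Lam = H"
  "Arr C lam" "Dom C lam = H" "Cod C lam = Unit C"
  using ty_mu ty_eta ty_delta ty_eps ty_s ty_Lam ty_lam by (simp_all add: hom_iff)

lemma sym_ty: "Obj C A \<Longrightarrow> Obj C B \<Longrightarrow> hom C (OT C A B) (OT C B A) (Sym C A B)"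
  using smc1 unfolding smc1_def by blast
lemma sym_nat: "hom C A B f \<Longrightarrow> hom C D E g \<Longrightarrow>
        Comp C (Sym C B E) (MT C f g) = Comp C (MT C g f) (Sym C A D)"
  using smc1 unfolding smc1_def by blast
lemma sym_unit: "Obj C A \<Longrightarrow> Sym C (Unit C) A = Id C A"
  using smc1 unfolding smc1_def by blast
lemma sig_simps[simp]: "Arr C sig" "Dom C sig = OT C H H" "Cod C sig = OT C H H"
  using sym_ty[of H H] by (simp_all add: hom_iff)

lemma hopf: "is_hopf C H mu eta delta eps s" using ih unfolding is_integral_hopf_def by blast

lemma m_assoc: "mu \<cdot> (mu \<otimes> i) = mu \<cdot> (i \<otimes> mu)"
  and m_unit_l: "mu \<cdot> (eta \<otimes> i) = i" and m_unit_r: "mu \<cdot> (i \<otimes> eta) = i"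
  using hopf unfolding is_hopf_def is_monoid_def by blast+
lemma d_coassoc: "(delta \<otimes> i) \<cdot> delta = (i \<otimes> delta) \<cdot> delta"
  and d_counit_l: "(eps \<otimes> i) \<cdot> delta = i" and d_counit_r: "(i \<otimes> eps) \<cdot> delta = i"
  using hopf unfolding is_hopf_def is_comonoid_def by blast+
lemma bialg: "delta \<cdot> mu = (mu \<otimes> mu) \<cdot> (i \<otimes> (sig \<otimes> i)) \<cdot> (delta \<otimes> delta)"
  and d_eta: "delta \<cdot> eta = eta \<otimes> eta" and e_mu: "eps \<cdot> mu = eps \<otimes> eps"
  and e_eta: "eps \<cdot> eta = Id C (Unit C)"
  and anti_l: "mu \<cdot> (s \<otimes> i) \<cdot> delta = eta \<cdot> eps"
  and anti_r: "mu \<cdot> (i \<otimes> s) \<cdot> delta = eta \<cdot> eps"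
  using hopf unfolding is_hopf_def by blast+
lemma coint: "mu \<cdot> (Lam \<otimes> i) = Lam \<cdot> eps"
  and rint: "(i \<otimes> lam) \<cdot> delta = eta \<cdot> lam"
  and norm: "lam \<cdot> Lam = Id C (Unit C)"
  using ih unfolding is_integral_hopf_def is_left_cointegral_def is_right_integral_def by blast+

lemma absorb_r: "Arr C g \<Longrightarrow> Cod C g = Unit C \<Longrightarrow> mu \<cdot> (i \<otimes> (eta \<cdot> g)) = i \<otimes> g"
proof -
  assume a: "Arr C g" "Cod C g = Unit C"
  have "i \<otimes> (eta \<cdot> g) = (i \<otimes> eta) \<cdot> (i \<otimes> g)" using a by (simp add: inter id_left)
  then have "mu \<cdot> (i \<otimes> (eta \<cdot> g)) = (mu \<cdot> (i \<otimes> eta)) \<cdot> (i \<otimes> g)" using a by (simp add: comp_assoc)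
  then show ?thesis using a by (simp add: m_unit_r id_left)
qed
lemma absorb_l: "Arr C g \<Longrightarrow> Cod C g = Unit C \<Longrightarrow> mu \<cdot> ((eta \<cdot> g) \<otimes> i) = g \<otimes> i"
proof -
  assume a: "Arr C g" "Cod C g = Unit C"
  have "(eta \<cdot> g) \<otimes> i = (eta \<otimes> i) \<cdot> (g \<otimes> i)" using a by (simp add: inter id_left)
  then have "mu \<cdot> ((eta \<cdot> g) \<otimes> i) = (mu \<cdot> (eta \<otimes> i)) \<cdot> (g \<otimes> i)" using a by (simp add: comp_assoc)
  then show ?thesis using a by (simp add: m_unit_l id_left)
qed
lemma up1: "Arr C f \<Longrightarrow> Arr C g \<Longrightarrow> Arr C h \<Longrightarrow> Dom C f = Unit C \<Longrightarrow> Dom C g = Cod C h \<Longrightarrow>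
   f \<otimes> (g \<cdot> h) = (f \<otimes> g) \<cdot> h"
  using inter[of "Id C (Unit C)" f h g] by (simp add: id_right MT_unit_l)
lemma up2: "Arr C f \<Longrightarrow> Arr C g \<Longrightarrow> Arr C h \<Longrightarrow> Dom C f = Unit C \<Longrightarrow> Dom C g = Cod C h \<Longrightarrow>
   (g \<cdot> h) \<otimes> f = (g \<otimes> f) \<cdot> h"
  using inter[of h g "Id C (Unit C)" f] by (simp add: id_right MT_unit_r)

lemma ep1: "Arr C a \<Longrightarrow> Arr C b \<Longrightarrow> Arr C w \<Longrightarrow> Dom C a = Cod C b \<Longrightarrow> Cod C w = Unit C \<Longrightarrow>
   (a \<cdot> b) \<otimes> w = a \<cdot> (b \<otimes> w)"
  using inter[of b a w "Id C (Unit C)"] by (simp add: id_left MT_unit_r)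
lemma ep2: "Arr C a \<Longrightarrow> Arr C b \<Longrightarrow> Arr C w \<Longrightarrow> Dom C a = Cod C b \<Longrightarrow> Cod C w = Unit C \<Longrightarrow>
   w \<otimes> (a \<cdot> b) = a \<cdot> (w \<otimes> b)"
  using inter[of w "Id C (Unit C)" b a] by (simp add: id_left MT_unit_l)

lemmas nrmH = ep1 ep2 nrm absorb_r absorb_l absorb_r[THEN comp_k] absorb_l[THEN comp_k]

end


context hopf_loc begin
lemma sigLam: "sig \<cdot> (Lam \<otimes> i) = i \<otimes> Lam"
  using sym_nat[OF ty_Lam, of H H i] sym_unit[of H] by (simp add: hom_iff id_right)
lemma K4eq: "((eta \<cdot> eps) \<otimes> i) \<cdot> delta \<cdot> Lam = eta \<otimes> Lam"
proof -
  have "(eta \<cdot> eps) \<otimes> i = (eta \<otimes> i) \<cdot> (eps \<otimes> i)" by (simp add: inter id_left)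
  then have "((eta \<cdot> eps) \<otimes> i) \<cdot> delta \<cdot> Lam = (eta \<otimes> i) \<cdot> ((eps \<otimes> i) \<cdot> delta) \<cdot> Lam"
    by (simp add: comp_assoc)
  also have "\<dots> = (eta \<otimes> i) \<cdot> Lam" by (simp add: d_counit_l id_left)
  also have "\<dots> = eta \<otimes> Lam" using inter[of "Id C (Unit C)" eta Lam i] by (simp add: id_left id_right MT_unit_l)
  finally show ?thesis .
qed

lemma F_w1: "cseq [i \<otimes> (lam \<cdot> mu), ((s \<otimes> i) \<cdot> delta \<cdot> Lam) \<otimes> i] = cseq [i \<otimes> lam, i \<otimes> mu, s \<otimes> i \<otimes> i, delta \<otimes> i, Lam \<otimes> i]"
  by (simp add: cseq.simps nrmH)

lemma F_1: "cseq [i \<otimes> (lam \<cdot> mu), ((s \<otimes> i) \<cdot> delta \<cdot> Lam) \<otimes> i] = cseq [i \<otimes> lam, i \<otimes> mu, s \<otimes> i \<otimes> i, delta \<otimes> i, Lam \<otimes> i]"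
  by (rule window[where pre="[]" and w="[i \<otimes> (lam \<cdot> mu), ((s \<otimes> i) \<cdot> delta \<cdot> Lam) \<otimes> i]" and suf="[]" and w'="[i \<otimes> lam, i \<otimes> mu, s \<otimes> i \<otimes> i, delta \<otimes> i, Lam \<otimes> i]"]) (simp_all add: F_w1)

lemma F_w2: "cseq [i \<otimes> lam] = cseq [mu, i \<otimes> i \<otimes> lam, i \<otimes> delta]"
  by (simp add: cseq.simps nrmH rint)

lemma F_2: "cseq [i \<otimes> lam, i \<otimes> mu, s \<otimes> i \<otimes> i, delta \<otimes> i, Lam \<otimes> i] = cseq [mu, i \<otimes> i \<otimes> lam, i \<otimes> delta, i \<otimes> mu, s \<otimes> i \<otimes> i, delta \<otimes> i, Lam \<otimes> i]"
  by (rule window[where pre="[]" and w="[i \<otimes> lam]" and suf="[i \<otimes> mu, s \<otimes> i \<otimes> i, delta \<otimes> i, Lam \<otimes> i]" and w'="[mu, i \<otimes> i \<otimes> lam, i \<otimes> delta]"]) (simp_all add: F_w2)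

lemma F_w3: "cseq [i \<otimes> delta, i \<otimes> mu] = cseq [i \<otimes> mu \<otimes> mu, i \<otimes> i \<otimes> sig \<otimes> i, i \<otimes> delta \<otimes> delta]"
  by (simp add: cseq.simps nrmH bialg)

lemma F_3: "cseq [mu, i \<otimes> i \<otimes> lam, i \<otimes> delta, i \<otimes> mu, s \<otimes> i \<otimes> i, delta \<otimes> i, Lam \<otimes> i] = cseq [mu, i \<otimes> i \<otimes> lam, i \<otimes> mu \<otimes> mu, i \<otimes> i \<otimes> sig \<otimes> i, i \<otimes> delta \<otimes> delta, s \<otimes> i \<otimes> i, delta \<otimes> i, Lam \<otimes> i]"
  by (rule window[where pre="[mu, i \<otimes> i \<otimes> lam]" and w="[i \<otimes> delta, i \<otimes> mu]" and suf="[s \<otimes> i \<otimes> i, delta \<otimes> i, Lam \<otimes> i]" and w'="[i \<otimes> mu \<otimes> mu, i \<otimes> i \<otimes> sig \<otimes> i, i \<otimes> delta \<otimes> delta]"]) (simp_all add: F_w3)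

lemma F_w4: "cseq [mu, i \<otimes> i \<otimes> lam, i \<otimes> mu \<otimes> mu] = cseq [i \<otimes> lam, mu \<otimes> mu, mu \<otimes> i \<otimes> i \<otimes> i]"
  by (simp add: cseq.simps nrmH m_assoc)

lemma F_4: "cseq [mu, i \<otimes> i \<otimes> lam, i \<otimes> mu \<otimes> mu, i \<otimes> i \<otimes> sig \<otimes> i, i \<otimes> delta \<otimes> delta, s \<otimes> i \<otimes> i, delta \<otimes> i, Lam \<otimes> i] = cseq [i \<otimes> lam, mu \<otimes> mu, mu \<otimes> i \<otimes> i \<otimes> i, i \<otimes> i \<otimes> sig \<otimes> i, i \<otimes> delta \<otimes> delta, s \<otimes> i \<otimes> i, delta \<otimes> i, Lam \<otimes> i]"
  by (rule window[where pre="[]" and w="[mu, i \<otimes> i \<otimes> lam, i \<otimes> mu \<otimes> mu]" and suf="[i \<otimes> i \<otimes> sig \<otimes> i, i \<otimes> delta \<otimes> delta, s \<otimes> i \<otimes> i, delta \<otimes> i, Lam \<otimes> i]" and w'="[i \<otimes> lam, mu \<otimes> mu, mu \<otimes> i \<otimes> i \<otimes> i]"]) (simp_all add: F_w4)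

lemma F_w5: "cseq [mu \<otimes> i \<otimes> i \<otimes> i, i \<otimes> i \<otimes> sig \<otimes> i] = cseq [i \<otimes> sig \<otimes> i, mu \<otimes> i \<otimes> i \<otimes> i]"
  by (simp add: cseq.simps nrmH)

lemma F_5: "cseq [i \<otimes> lam, mu \<otimes> mu, mu \<otimes> i \<otimes> i \<otimes> i, i \<otimes> i \<otimes> sig \<otimes> i, i \<otimes> delta \<otimes> delta, s \<otimes> i \<otimes> i, delta \<otimes> i, Lam \<otimes> i] = cseq [i \<otimes> lam, mu \<otimes> mu, i \<otimes> sig \<otimes> i, mu \<otimes> i \<otimes> i \<otimes> i, i \<otimes> delta \<otimes> delta, s \<otimes> i \<otimes> i, delta \<otimes> i, Lam \<otimes> i]"
  by (rule window[where pre="[i \<otimes> lam, mu \<otimes> mu]" and w="[mu \<otimes> i \<otimes> i \<otimes> i, i \<otimes> i \<otimes> sig \<otimes> i]" and suf="[i \<otimes> delta \<otimes> delta, s \<otimes> i \<otimes> i, delta \<otimes> i, Lam \<otimes> i]" and w'="[i \<otimes> sig \<otimes> i, mu \<otimes> i \<otimes> i \<otimes> i]"]) (simp_all add: F_w5)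

lemma F_w6: "cseq [mu \<otimes> i \<otimes> i \<otimes> i, i \<otimes> delta \<otimes> delta, s \<otimes> i \<otimes> i, delta \<otimes> i, Lam \<otimes> i] = cseq [((mu \<otimes> i) \<cdot> (s \<otimes> i \<otimes> i) \<cdot> ((i \<otimes> delta) \<cdot> delta) \<cdot> Lam) \<otimes> i \<otimes> i, delta]"
  by (simp add: cseq.simps nrmH)

lemma F_6: "cseq [i \<otimes> lam, mu \<otimes> mu, i \<otimes> sig \<otimes> i, mu \<otimes> i \<otimes> i \<otimes> i, i \<otimes> delta \<otimes> delta, s \<otimes> i \<otimes> i, delta \<otimes> i, Lam \<otimes> i] = cseq [i \<otimes> lam, mu \<otimes> mu, i \<otimes> sig \<otimes> i, ((mu \<otimes> i) \<cdot> (s \<otimes> i \<otimes> i) \<cdot> ((i \<otimes> delta) \<cdot> delta) \<cdot> Lam) \<otimes> i \<otimes> i, delta]"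
  by (rule window[where pre="[i \<otimes> lam, mu \<otimes> mu, i \<otimes> sig \<otimes> i]" and w="[mu \<otimes> i \<otimes> i \<otimes> i, i \<otimes> delta \<otimes> delta, s \<otimes> i \<otimes> i, delta \<otimes> i, Lam \<otimes> i]" and suf="[]" and w'="[((mu \<otimes> i) \<cdot> (s \<otimes> i \<otimes> i) \<cdot> ((i \<otimes> delta) \<cdot> delta) \<cdot> Lam) \<otimes> i \<otimes> i, delta]"]) (simp_all add: F_w6)

lemma F_w7: "cseq [((mu \<otimes> i) \<cdot> (s \<otimes> i \<otimes> i) \<cdot> ((i \<otimes> delta) \<cdot> delta) \<cdot> Lam) \<otimes> i \<otimes> i] = cseq [((mu \<otimes> i) \<cdot> (s \<otimes> i \<otimes> i) \<cdot> ((delta \<otimes> i) \<cdot> delta) \<cdot> Lam) \<otimes> i \<otimes> i]"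
  by (simp add: cseq.simps d_coassoc)

lemma F_7: "cseq [i \<otimes> lam, mu \<otimes> mu, i \<otimes> sig \<otimes> i, ((mu \<otimes> i) \<cdot> (s \<otimes> i \<otimes> i) \<cdot> ((i \<otimes> delta) \<cdot> delta) \<cdot> Lam) \<otimes> i \<otimes> i, delta] = cseq [i \<otimes> lam, mu \<otimes> mu, i \<otimes> sig \<otimes> i, ((mu \<otimes> i) \<cdot> (s \<otimes> i \<otimes> i) \<cdot> ((delta \<otimes> i) \<cdot> delta) \<cdot> Lam) \<otimes> i \<otimes> i, delta]"
  by (rule window[where pre="[i \<otimes> lam, mu \<otimes> mu, i \<otimes> sig \<otimes> i]" and w="[((mu \<otimes> i) \<cdot> (s \<otimes> i \<otimes> i) \<cdot> ((i \<otimes> delta) \<cdot> delta) \<cdot> Lam) \<otimes> i \<otimes> i]" and suf="[delta]" and w'="[((mu \<otimes> i) \<cdot> (s \<otimes> i \<otimes> i) \<cdot> ((delta \<otimes> i) \<cdot> delta) \<cdot> Lam) \<otimes> i \<otimes> i]"]) (simp_all add: F_w7)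

lemma F_w8: "cseq [((mu \<otimes> i) \<cdot> (s \<otimes> i \<otimes> i) \<cdot> ((delta \<otimes> i) \<cdot> delta) \<cdot> Lam) \<otimes> i \<otimes> i] = cseq [(((mu \<cdot> (s \<otimes> i) \<cdot> delta) \<otimes> i) \<cdot> delta \<cdot> Lam) \<otimes> i \<otimes> i]"
  by (simp add: cseq.simps nrmH)

lemma F_8: "cseq [i \<otimes> lam, mu \<otimes> mu, i \<otimes> sig \<otimes> i, ((mu \<otimes> i) \<cdot> (s \<otimes> i \<otimes> i) \<cdot> ((delta \<otimes> i) \<cdot> delta) \<cdot> Lam) \<otimes> i \<otimes> i, delta] = cseq [i \<otimes> lam, mu \<otimes> mu, i \<otimes> sig \<otimes> i, (((mu \<cdot> (s \<otimes> i) \<cdot> delta) \<otimes> i) \<cdot> delta \<cdot> Lam) \<otimes> i \<otimes> i, delta]"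
  by (rule window[where pre="[i \<otimes> lam, mu \<otimes> mu, i \<otimes> sig \<otimes> i]" and w="[((mu \<otimes> i) \<cdot> (s \<otimes> i \<otimes> i) \<cdot> ((delta \<otimes> i) \<cdot> delta) \<cdot> Lam) \<otimes> i \<otimes> i]" and suf="[delta]" and w'="[(((mu \<cdot> (s \<otimes> i) \<cdot> delta) \<otimes> i) \<cdot> delta \<cdot> Lam) \<otimes> i \<otimes> i]"]) (simp_all add: F_w8)

lemma F_w9: "cseq [(((mu \<cdot> (s \<otimes> i) \<cdot> delta) \<otimes> i) \<cdot> delta \<cdot> Lam) \<otimes> i \<otimes> i] = cseq [(((eta \<cdot> eps) \<otimes> i) \<cdot> delta \<cdot> Lam) \<otimes> i \<otimes> i]"
  by (simp add: cseq.simps anti_l)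

lemma F_9: "cseq [i \<otimes> lam, mu \<otimes> mu, i \<otimes> sig \<otimes> i, (((mu \<cdot> (s \<otimes> i) \<cdot> delta) \<otimes> i) \<cdot> delta \<cdot> Lam) \<otimes> i \<otimes> i, delta] = cseq [i \<otimes> lam, mu \<otimes> mu, i \<otimes> sig \<otimes> i, (((eta \<cdot> eps) \<otimes> i) \<cdot> delta \<cdot> Lam) \<otimes> i \<otimes> i, delta]"
  by (rule window[where pre="[i \<otimes> lam, mu \<otimes> mu, i \<otimes> sig \<otimes> i]" and w="[(((mu \<cdot> (s \<otimes> i) \<cdot> delta) \<otimes> i) \<cdot> delta \<cdot> Lam) \<otimes> i \<otimes> i]" and suf="[delta]" and w'="[(((eta \<cdot> eps) \<otimes> i) \<cdot> delta \<cdot> Lam) \<otimes> i \<otimes> i]"]) (simp_all add: F_w9)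

lemma F_w10: "cseq [(((eta \<cdot> eps) \<otimes> i) \<cdot> delta \<cdot> Lam) \<otimes> i \<otimes> i] = cseq [(eta \<otimes> Lam) \<otimes> i \<otimes> i]"
  by (simp add: cseq.simps K4eq)

lemma F_10: "cseq [i \<otimes> lam, mu \<otimes> mu, i \<otimes> sig \<otimes> i, (((eta \<cdot> eps) \<otimes> i) \<cdot> delta \<cdot> Lam) \<otimes> i \<otimes> i, delta] = cseq [i \<otimes> lam, mu \<otimes> mu, i \<otimes> sig \<otimes> i, (eta \<otimes> Lam) \<otimes> i \<otimes> i, delta]"
  by (rule window[where pre="[i \<otimes> lam, mu \<otimes> mu, i \<otimes> sig \<otimes> i]" and w="[(((eta \<cdot> eps) \<otimes> i) \<cdot> delta \<cdot> Lam) \<otimes> i \<otimes> i]" and suf="[delta]" and w'="[(eta \<otimes> Lam) \<otimes> i \<otimes> i]"]) (simp_all add: F_w10)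

lemma F_w11: "cseq [i \<otimes> sig \<otimes> i, (eta \<otimes> Lam) \<otimes> i \<otimes> i] = cseq [eta \<otimes> i \<otimes> Lam \<otimes> i]"
  by (simp add: cseq.simps nrmH sigLam)

lemma F_11: "cseq [i \<otimes> lam, mu \<otimes> mu, i \<otimes> sig \<otimes> i, (eta \<otimes> Lam) \<otimes> i \<otimes> i, delta] = cseq [i \<otimes> lam, mu \<otimes> mu, eta \<otimes> i \<otimes> Lam \<otimes> i, delta]"
  by (rule window[where pre="[i \<otimes> lam, mu \<otimes> mu]" and w="[i \<otimes> sig \<otimes> i, (eta \<otimes> Lam) \<otimes> i \<otimes> i]" and suf="[delta]" and w'="[eta \<otimes> i \<otimes> Lam \<otimes> i]"]) (simp_all add: F_w11)

lemma F_w12: "cseq [mu \<otimes> mu, eta \<otimes> i \<otimes> Lam \<otimes> i] = cseq [i \<otimes> (Lam \<cdot> eps)]"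
  by (simp add: cseq.simps nrmH m_unit_l coint)

lemma F_12: "cseq [i \<otimes> lam, mu \<otimes> mu, eta \<otimes> i \<otimes> Lam \<otimes> i, delta] = cseq [i \<otimes> lam, i \<otimes> (Lam \<cdot> eps), delta]"
  by (rule window[where pre="[i \<otimes> lam]" and w="[mu \<otimes> mu, eta \<otimes> i \<otimes> Lam \<otimes> i]" and suf="[delta]" and w'="[i \<otimes> (Lam \<cdot> eps)]"]) (simp_all add: F_w12)

lemma F_w13: "cseq [i \<otimes> lam, i \<otimes> (Lam \<cdot> eps), delta] = cseq [i]"
  by (simp add: cseq.simps nrmH norm norm[THEN comp_k] d_counit_r)

lemma F_13: "cseq [i \<otimes> lam, i \<otimes> (Lam \<cdot> eps), delta] = cseq [i]"
  by (rule window[where pre="[]" and w="[i \<otimes> lam, i \<otimes> (Lam \<cdot> eps), delta]" and suf="[]" and w'="[i]"]) (simp_all add: F_w13)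

lemma F: "cseq [i \<otimes> (lam \<cdot> mu), ((s \<otimes> i) \<cdot> delta \<cdot> Lam) \<otimes> i] = cseq [i]"

  apply (rule trans[OF F_1])

  apply (rule trans[OF F_2])

  apply (rule trans[OF F_3])

  apply (rule trans[OF F_4])

  apply (rule trans[OF F_5])

  apply (rule trans[OF F_6])

  apply (rule trans[OF F_7])

  apply (rule trans[OF F_8])

  apply (rule trans[OF F_9])

  apply (rule trans[OF F_10])

  apply (rule trans[OF F_11])

  apply (rule trans[OF F_12])

  by (rule F_13)



lemma F_main: "(i \<otimes> (lam \<cdot> mu)) \<cdot> (((s \<otimes> i) \<cdot> (delta \<cdot> Lam)) \<otimes> i) = i"
  using F by (simp add: cseq.simps)

lemma dual_ih: "is_integral_hopf (dual C) H delta eps mu eta s lam Lam"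
proof -
  have t: "Arr C mu" "Arr C delta" "Arr C s" by simp_all
  have b: "Comp C (Comp C (MT C mu mu) (MT C (MT C i sig) i)) (MT C delta delta) = delta \<cdot> mu"
    by (simp add: bialg comp_assoc MT_assoc)
  have a1: "Comp C (Comp C mu (MT C i s)) delta = eta \<cdot> eps" by (simp add: comp_assoc anti_r)
  have a2: "Comp C (Comp C mu (MT C s i)) delta = eta \<cdot> eps" by (simp add: comp_assoc anti_l)
  show ?thesis
    unfolding is_integral_hopf_def is_hopf_def is_monoid_def is_comonoid_def is_left_cointegral_def
      is_right_integral_def dual_simps hom_dual
    using ty_mu ty_eta ty_delta ty_eps ty_s ty_Lam ty_lam b a1 a2
      d_coassoc d_counit_l d_counit_r m_assoc m_unit_l m_unit_r e_mu d_eta e_eta coint rint norm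
    by simp
qed

end

context smc0_loc begin
lemma dual_monoid: "is_monoid (dual C) X d e \<longleftrightarrow> is_comonoid C X d e"
  unfolding is_monoid_def is_comonoid_def dual_simps hom_dual by auto
lemma dual_comonoid: "is_comonoid (dual C) X d e \<longleftrightarrow> is_monoid C X d e"
  unfolding is_monoid_def is_comonoid_def dual_simps hom_dual by auto
lemma dual_mff: "monoid_frobenius_form (dual C) X d e g \<longleftrightarrow> comonoid_frobenius_form C X d e g"
  unfolding monoid_frobenius_form_def comonoid_frobenius_form_def dual_simps hom_dual by auto
lemma dual_frob: "is_frobenius_algebra (dual C) X d e m u \<longleftrightarrow> is_frobenius_algebra C X m u d e"
  unfolding is_frobenius_algebra_def dual_monoid dual_comonoid dual_simps by auto
end

lemma dual_F:
  assumes "smc1 C" "is_integral_hopf C H mu eta delta eps s Lam lam"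
  shows "Comp C (MT C (Id C H) (Comp C (Comp C lam mu) (MT C (Id C H) s))) (MT C (Comp C delta Lam) (Id C H)) = Id C H"
proof -
  have s0: "smc0 C" using assms(1) unfolding smc1_def by blast
  interpret hopf_loc C H mu eta delta eps s Lam lam
    by (rule hopf_loc.intro[OF smc0_loc.intro[OF s0]]) (rule hopf_loc_axioms.intro[OF assms])
  have d1: "smc1 (dual C)" by (rule smc1_dual[OF assms(1)])
  have d0: "smc0 (dual C)" using d1 unfolding smc1_def by blast
  interpret D: hopf_loc "dual C" H delta eps mu eta s lam Lam
    by (rule hopf_loc.intro[OF smc0_loc.intro[OF d0]]) (rule hopf_loc_axioms.intro[OF d1 dual_ih])
  show ?thesis using D.F_main by simp
qed

context hopf_loc begin


lemma G_main: "(((lam \<cdot> mu) \<cdot> (i \<otimes> s)) \<otimes> i) \<cdot> (i \<otimes> (delta \<cdot> Lam)) = ((lam \<cdot> mu) \<otimes> i) \<cdot> (i \<otimes> ((s \<otimes> i) \<cdot> (delta \<cdot> Lam)))"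
proof -
  have 1: "((lam \<cdot> mu) \<cdot> (i \<otimes> s)) \<otimes> i = ((lam \<cdot> mu) \<otimes> i) \<cdot> ((i \<otimes> s) \<otimes> i)" by (simp add: inter id_left)
  have 2: "((i \<otimes> s) \<otimes> i) \<cdot> (i \<otimes> (delta \<cdot> Lam)) = i \<otimes> ((s \<otimes> i) \<cdot> (delta \<cdot> Lam))"
    by (simp add: MT_assoc inter id_left id_right)
  show ?thesis unfolding 1 by (simp add: comp_assoc 2)
qed
end

context smc0_loc begin
lemma uniq:
  assumes X: "Obj C X" and be: "hom C (OT C X X) (Unit C) be" and a: "hom C (Unit C) (OT C X X) a"
    and b: "hom C (Unit C) (OT C X X) b"
    and sa: "Comp C (MT C (Id C X) be) (MT C a (Id C X)) = Id C X"
    and sb: "Comp C (MT C be (Id C X)) (MT C (Id C X) b) = Id C X"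
  shows "a = b"
proof -
  let ?j = "Id C X"
  have ty: "Arr C a" "Dom C a = Unit C" "Cod C a = OT C X X" "Arr C b" "Dom C b = Unit C" "Cod C b = OT C X X"
    "Arr C be" "Dom C be = OT C X X" "Cod C be = Unit C" using a b be by (simp_all add: hom_iff)
  have "a = Comp C (MT C ?j (Comp C (MT C be ?j) (MT C ?j b))) a" using sb ty X by (simp add: MT_Id id_left)
  also have "\<dots> = Comp C (Comp C (MT C ?j (MT C be ?j)) (MT C ?j (MT C ?j b))) a"
    using ty X by (simp add: inter id_left)
  also have "\<dots> = Comp C (MT C ?j (MT C be ?j)) (Comp C (MT C ?j (MT C ?j b)) a)"
    using ty X by (simp add: comp_assoc)
  also have "Comp C (MT C ?j (MT C ?j b)) a = Comp C (MT C a (MT C ?j ?j)) b"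
  proof -
    have "Comp C (MT C ?j (MT C ?j b)) a = Comp C (MT C (Id C (OT C X X)) b) (MT C a (Id C (Unit C)))"
      using ty X by (simp add: MT_assoc[symmetric] MT_Id MT_unit_r)
    also have "\<dots> = MT C a b" using ty X by (simp add: inter id_left id_right)
    also have "\<dots> = Comp C (MT C a (Id C (OT C X X))) (MT C (Id C (Unit C)) b)"
      using ty X by (simp add: inter id_left id_right)
    also have "\<dots> = Comp C (MT C a (MT C ?j ?j)) b" using ty X by (simp add: MT_Id MT_unit_l)
    finally show ?thesis .
  qed
  also have "Comp C (MT C ?j (MT C be ?j)) (Comp C (MT C a (MT C ?j ?j)) b) =
      Comp C (Comp C (MT C ?j (MT C be ?j)) (MT C a (MT C ?j ?j))) b"
    using ty X by (simp add: comp_assoc)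
  also have "Comp C (MT C ?j (MT C be ?j)) (MT C a (MT C ?j ?j)) = MT C ?j ?j"
  proof -
    have "Comp C (MT C ?j (MT C be ?j)) (MT C a (MT C ?j ?j)) = Comp C (MT C (MT C ?j be) ?j) (MT C (MT C a ?j) ?j)"
      using ty X by (simp add: MT_assoc)
    also have "\<dots> = MT C (Comp C (MT C ?j be) (MT C a ?j)) ?j" using ty X by (simp add: inter id_left)
    finally show ?thesis using sa by simp
  qed
  also have "Comp C (MT C ?j ?j) b = b" using ty X by (simp add: MT_Id id_left)
  finally show ?thesis .
qed
end

context frob_loc begin
lemma K_aux: "(i \<otimes> be \<otimes> i) \<cdot> (i \<otimes> i \<otimes> bb) = i \<otimes> i"
  by (simp add: nrmF sn2)
lemma K_w1: "cseq [m \<otimes> i] = cseq [((i \<otimes> be) \<cdot> (bb \<otimes> i)) \<otimes> i, m \<otimes> i]"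
  by (simp add: cseq.simps nrmF sn1)

lemma K_1: "cseq [m \<otimes> i, i \<otimes> bb] = cseq [((i \<otimes> be) \<cdot> (bb \<otimes> i)) \<otimes> i, m \<otimes> i, i \<otimes> bb]"
  by (rule window[where pre="[]" and w="[m \<otimes> i]" and suf="[i \<otimes> bb]" and w'="[((i \<otimes> be) \<cdot> (bb \<otimes> i)) \<otimes> i, m \<otimes> i]"]) (simp_all add: K_w1)

lemma K_w2: "cseq [((i \<otimes> be) \<cdot> (bb \<otimes> i)) \<otimes> i] = cseq [i \<otimes> be \<otimes> i, bb \<otimes> i \<otimes> i]"
  by (simp add: cseq.simps nrmL)

lemma K_2: "cseq [((i \<otimes> be) \<cdot> (bb \<otimes> i)) \<otimes> i, m \<otimes> i, i \<otimes> bb] = cseq [i \<otimes> be \<otimes> i, bb \<otimes> i \<otimes> i, m \<otimes> i, i \<otimes> bb]"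
  by (rule window[where pre="[]" and w="[((i \<otimes> be) \<cdot> (bb \<otimes> i)) \<otimes> i]" and suf="[m \<otimes> i, i \<otimes> bb]" and w'="[i \<otimes> be \<otimes> i, bb \<otimes> i \<otimes> i]"]) (simp_all add: K_w2)

lemma K_w3: "cseq [bb \<otimes> i \<otimes> i, m \<otimes> i] = cseq [i \<otimes> i \<otimes> m \<otimes> i, bb \<otimes> i \<otimes> i \<otimes> i]"
  by (simp add: cseq.simps nrmF)

lemma K_3: "cseq [i \<otimes> be \<otimes> i, bb \<otimes> i \<otimes> i, m \<otimes> i, i \<otimes> bb] = cseq [i \<otimes> be \<otimes> i, i \<otimes> i \<otimes> m \<otimes> i, bb \<otimes> i \<otimes> i \<otimes> i, i \<otimes> bb]"
  by (rule window[where pre="[i \<otimes> be \<otimes> i]" and w="[bb \<otimes> i \<otimes> i, m \<otimes> i]" and suf="[i \<otimes> bb]" and w'="[i \<otimes> i \<otimes> m \<otimes> i, bb \<otimes> i \<otimes> i \<otimes> i]"]) (simp_all add: K_w3)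

lemma K_w4: "cseq [i \<otimes> be \<otimes> i, i \<otimes> i \<otimes> m \<otimes> i] = cseq [i \<otimes> be \<otimes> i, i \<otimes> m \<otimes> i \<otimes> i]"
  by (simp add: cseq.simps nrmF inv)

lemma K_4: "cseq [i \<otimes> be \<otimes> i, i \<otimes> i \<otimes> m \<otimes> i, bb \<otimes> i \<otimes> i \<otimes> i, i \<otimes> bb] = cseq [i \<otimes> be \<otimes> i, i \<otimes> m \<otimes> i \<otimes> i, bb \<otimes> i \<otimes> i \<otimes> i, i \<otimes> bb]"
  by (rule window[where pre="[]" and w="[i \<otimes> be \<otimes> i, i \<otimes> i \<otimes> m \<otimes> i]" and suf="[bb \<otimes> i \<otimes> i \<otimes> i, i \<otimes> bb]" and w'="[i \<otimes> be \<otimes> i, i \<otimes> m \<otimes> i \<otimes> i]"]) (simp_all add: K_w4)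

lemma K_w5: "cseq [bb \<otimes> i \<otimes> i \<otimes> i, i \<otimes> bb] = cseq [i \<otimes> i \<otimes> i \<otimes> bb, bb \<otimes> i]"
  by (simp add: cseq.simps nrmF)

lemma K_5: "cseq [i \<otimes> be \<otimes> i, i \<otimes> m \<otimes> i \<otimes> i, bb \<otimes> i \<otimes> i \<otimes> i, i \<otimes> bb] = cseq [i \<otimes> be \<otimes> i, i \<otimes> m \<otimes> i \<otimes> i, i \<otimes> i \<otimes> i \<otimes> bb, bb \<otimes> i]"
  by (rule window[where pre="[i \<otimes> be \<otimes> i, i \<otimes> m \<otimes> i \<otimes> i]" and w="[bb \<otimes> i \<otimes> i \<otimes> i, i \<otimes> bb]" and suf="[]" and w'="[i \<otimes> i \<otimes> i \<otimes> bb, bb \<otimes> i]"]) (simp_all add: K_w5)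

lemma K_w6: "cseq [i \<otimes> m \<otimes> i \<otimes> i, i \<otimes> i \<otimes> i \<otimes> bb] = cseq [i \<otimes> i \<otimes> bb, i \<otimes> m]"
  by (simp add: cseq.simps nrmF)

lemma K_6: "cseq [i \<otimes> be \<otimes> i, i \<otimes> m \<otimes> i \<otimes> i, i \<otimes> i \<otimes> i \<otimes> bb, bb \<otimes> i] = cseq [i \<otimes> be \<otimes> i, i \<otimes> i \<otimes> bb, i \<otimes> m, bb \<otimes> i]"
  by (rule window[where pre="[i \<otimes> be \<otimes> i]" and w="[i \<otimes> m \<otimes> i \<otimes> i, i \<otimes> i \<otimes> i \<otimes> bb]" and suf="[bb \<otimes> i]" and w'="[i \<otimes> i \<otimes> bb, i \<otimes> m]"]) (simp_all add: K_w6)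

lemma K_w7: "cseq [i \<otimes> be \<otimes> i, i \<otimes> i \<otimes> bb, i \<otimes> m] = cseq [i \<otimes> m]"
  by (simp add: cseq.simps comp_assoc[symmetric] K_aux idl2)

lemma K_7: "cseq [i \<otimes> be \<otimes> i, i \<otimes> i \<otimes> bb, i \<otimes> m, bb \<otimes> i] = cseq [i \<otimes> m, bb \<otimes> i]"
  by (rule window[where pre="[]" and w="[i \<otimes> be \<otimes> i, i \<otimes> i \<otimes> bb, i \<otimes> m]" and suf="[bb \<otimes> i]" and w'="[i \<otimes> m]"]) (simp_all add: K_w7)

lemma K: "cseq [m \<otimes> i, i \<otimes> bb] = cseq [i \<otimes> m, bb \<otimes> i]"

  apply (rule trans[OF K_1])

  apply (rule trans[OF K_2])

  apply (rule trans[OF K_3])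

  apply (rule trans[OF K_4])

  apply (rule trans[OF K_5])

  apply (rule trans[OF K_6])

  by (rule K_7)

lemma Keq: "(m \<otimes> i) \<cdot> (i \<otimes> bb) = (i \<otimes> m) \<cdot> (bb \<otimes> i)"
  using K by (simp add: cseq.simps)
lemma FR1_w1: "cseq [i \<otimes> bb, m] = cseq [m \<otimes> i \<otimes> i, i \<otimes> i \<otimes> bb]"
  by (simp add: cseq.simps nrmF)

lemma FR1_1: "cseq [m \<otimes> i, i \<otimes> bb, m] = cseq [m \<otimes> i, m \<otimes> i \<otimes> i, i \<otimes> i \<otimes> bb]"
  by (rule window[where pre="[m \<otimes> i]" and w="[i \<otimes> bb, m]" and suf="[]" and w'="[m \<otimes> i \<otimes> i, i \<otimes> i \<otimes> bb]"]) (simp_all add: FR1_w1)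

lemma FR1_w2: "cseq [m \<otimes> i, m \<otimes> i \<otimes> i] = cseq [m \<otimes> i, i \<otimes> m \<otimes> i]"
  by (simp add: cseq.simps nrmF m_assoc)

lemma FR1_2: "cseq [m \<otimes> i, m \<otimes> i \<otimes> i, i \<otimes> i \<otimes> bb] = cseq [m \<otimes> i, i \<otimes> m \<otimes> i, i \<otimes> i \<otimes> bb]"
  by (rule window[where pre="[]" and w="[m \<otimes> i, m \<otimes> i \<otimes> i]" and suf="[i \<otimes> i \<otimes> bb]" and w'="[m \<otimes> i, i \<otimes> m \<otimes> i]"]) (simp_all add: FR1_w2)

lemma FR1: "cseq [m \<otimes> i, i \<otimes> bb, m] = cseq [m \<otimes> i, i \<otimes> m \<otimes> i, i \<otimes> i \<otimes> bb]"

  apply (rule trans[OF FR1_1])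

  by (rule FR1_2)

lemma FR2_w1: "cseq [bb \<otimes> i, m] = cseq [i \<otimes> i \<otimes> m, bb \<otimes> i \<otimes> i]"
  by (simp add: cseq.simps nrmF)

lemma FR2_1: "cseq [i \<otimes> m, bb \<otimes> i, m] = cseq [i \<otimes> m, i \<otimes> i \<otimes> m, bb \<otimes> i \<otimes> i]"
  by (rule window[where pre="[i \<otimes> m]" and w="[bb \<otimes> i, m]" and suf="[]" and w'="[i \<otimes> i \<otimes> m, bb \<otimes> i \<otimes> i]"]) (simp_all add: FR2_w1)

lemma FR2_w2: "cseq [i \<otimes> m, i \<otimes> i \<otimes> m] = cseq [i \<otimes> m, i \<otimes> m \<otimes> i]"
  by (simp add: cseq.simps nrmF m_assoc)

lemma FR2_2: "cseq [i \<otimes> m, i \<otimes> i \<otimes> m, bb \<otimes> i \<otimes> i] = cseq [i \<otimes> m, i \<otimes> m \<otimes> i, bb \<otimes> i \<otimes> i]"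
  by (rule window[where pre="[]" and w="[i \<otimes> m, i \<otimes> i \<otimes> m]" and suf="[bb \<otimes> i \<otimes> i]" and w'="[i \<otimes> m, i \<otimes> m \<otimes> i]"]) (simp_all add: FR2_w2)

lemma FR2: "cseq [i \<otimes> m, bb \<otimes> i, m] = cseq [i \<otimes> m, i \<otimes> m \<otimes> i, bb \<otimes> i \<otimes> i]"

  apply (rule trans[OF FR2_1])

  by (rule FR2_2)

lemma CC_w1: "cseq [u \<otimes> i] = cseq [i \<otimes> m, u \<otimes> i \<otimes> u]"
  by (simp add: cseq.simps nrmF m_ur)

lemma CC_1: "cseq [be, u \<otimes> i] = cseq [be, i \<otimes> m, u \<otimes> i \<otimes> u]"
  by (rule window[where pre="[be]" and w="[u \<otimes> i]" and suf="[]" and w'="[i \<otimes> m, u \<otimes> i \<otimes> u]"]) (simp_all add: CC_w1)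

lemma CC_w2: "cseq [be, i \<otimes> m] = cseq [be, m \<otimes> i]"
  by (simp add: cseq.simps inv)

lemma CC_2: "cseq [be, i \<otimes> m, u \<otimes> i \<otimes> u] = cseq [be, m \<otimes> i, u \<otimes> i \<otimes> u]"
  by (rule window[where pre="[]" and w="[be, i \<otimes> m]" and suf="[u \<otimes> i \<otimes> u]" and w'="[be, m \<otimes> i]"]) (simp_all add: CC_w2)

lemma CC_w3: "cseq [m \<otimes> i, u \<otimes> i \<otimes> u] = cseq [i \<otimes> u]"
  by (simp add: cseq.simps nrmF m_ul)

lemma CC_3: "cseq [be, m \<otimes> i, u \<otimes> i \<otimes> u] = cseq [be, i \<otimes> u]"
  by (rule window[where pre="[be]" and w="[m \<otimes> i, u \<otimes> i \<otimes> u]" and suf="[]" and w'="[i \<otimes> u]"]) (simp_all add: CC_w3)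

lemma CC: "cseq [be, u \<otimes> i] = cseq [be, i \<otimes> u]"

  apply (rule trans[OF CC_1])

  apply (rule trans[OF CC_2])

  by (rule CC_3)

lemma CU1_w1: "cseq [be \<otimes> i, u \<otimes> i \<otimes> i, i \<otimes> m] = cseq [m, be \<otimes> i \<otimes> i, u \<otimes> i \<otimes> i \<otimes> i]"
  by (simp add: cseq.simps nrmF)

lemma CU1_1: "cseq [be \<otimes> i, u \<otimes> i \<otimes> i, i \<otimes> m, bb \<otimes> i] = cseq [m, be \<otimes> i \<otimes> i, u \<otimes> i \<otimes> i \<otimes> i, bb \<otimes> i]"
  by (rule window[where pre="[]" and w="[be \<otimes> i, u \<otimes> i \<otimes> i, i \<otimes> m]" and suf="[bb \<otimes> i]" and w'="[m, be \<otimes> i \<otimes> i, u \<otimes> i \<otimes> i \<otimes> i]"]) (simp_all add: CU1_w1)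

lemma CU1_w2: "cseq [u \<otimes> i \<otimes> i \<otimes> i, bb \<otimes> i] = cseq [i \<otimes> bb \<otimes> i, u \<otimes> i]"
  by (simp add: cseq.simps nrmF)

lemma CU1_2: "cseq [m, be \<otimes> i \<otimes> i, u \<otimes> i \<otimes> i \<otimes> i, bb \<otimes> i] = cseq [m, be \<otimes> i \<otimes> i, i \<otimes> bb \<otimes> i, u \<otimes> i]"
  by (rule window[where pre="[m, be \<otimes> i \<otimes> i]" and w="[u \<otimes> i \<otimes> i \<otimes> i, bb \<otimes> i]" and suf="[]" and w'="[i \<otimes> bb \<otimes> i, u \<otimes> i]"]) (simp_all add: CU1_w2)

lemma CU1_w3: "cseq [be \<otimes> i \<otimes> i, i \<otimes> bb \<otimes> i, u \<otimes> i] = cseq [u \<otimes> i]"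
  by (simp add: cseq.simps nrmL sn2 sn2[THEN comp_k])

lemma CU1_3: "cseq [m, be \<otimes> i \<otimes> i, i \<otimes> bb \<otimes> i, u \<otimes> i] = cseq [m, u \<otimes> i]"
  by (rule window[where pre="[m]" and w="[be \<otimes> i \<otimes> i, i \<otimes> bb \<otimes> i, u \<otimes> i]" and suf="[]" and w'="[u \<otimes> i]"]) (simp_all add: CU1_w3)

lemma CU1_w4: "cseq [m, u \<otimes> i] = cseq [i]"
  by (simp add: cseq.simps m_ul)

lemma CU1_4: "cseq [m, u \<otimes> i] = cseq [i]"
  by (rule window[where pre="[]" and w="[m, u \<otimes> i]" and suf="[]" and w'="[i]"]) (simp_all add: CU1_w4)

lemma CU1: "cseq [be \<otimes> i, u \<otimes> i \<otimes> i, i \<otimes> m, bb \<otimes> i] = cseq [i]"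

  apply (rule trans[OF CU1_1])

  apply (rule trans[OF CU1_2])

  apply (rule trans[OF CU1_3])

  by (rule CU1_4)

lemma CU2_w1: "cseq [i \<otimes> i \<otimes> u, i \<otimes> m] = cseq [i \<otimes> m \<otimes> i, i \<otimes> i \<otimes> i \<otimes> u]"
  by (simp add: cseq.simps nrmF)

lemma CU2_1: "cseq [i \<otimes> be, i \<otimes> i \<otimes> u, i \<otimes> m, bb \<otimes> i] = cseq [i \<otimes> be, i \<otimes> m \<otimes> i, i \<otimes> i \<otimes> i \<otimes> u, bb \<otimes> i]"
  by (rule window[where pre="[i \<otimes> be]" and w="[i \<otimes> i \<otimes> u, i \<otimes> m]" and suf="[bb \<otimes> i]" and w'="[i \<otimes> m \<otimes> i, i \<otimes> i \<otimes> i \<otimes> u]"]) (simp_all add: CU2_w1)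

lemma CU2_w2: "cseq [i \<otimes> be, i \<otimes> m \<otimes> i] = cseq [i \<otimes> be, i \<otimes> i \<otimes> m]"
  by (simp add: cseq.simps nrmF inv)

lemma CU2_2: "cseq [i \<otimes> be, i \<otimes> m \<otimes> i, i \<otimes> i \<otimes> i \<otimes> u, bb \<otimes> i] = cseq [i \<otimes> be, i \<otimes> i \<otimes> m, i \<otimes> i \<otimes> i \<otimes> u, bb \<otimes> i]"
  by (rule window[where pre="[]" and w="[i \<otimes> be, i \<otimes> m \<otimes> i]" and suf="[i \<otimes> i \<otimes> i \<otimes> u, bb \<otimes> i]" and w'="[i \<otimes> be, i \<otimes> i \<otimes> m]"]) (simp_all add: CU2_w2)

lemma CU2_w3: "cseq [i \<otimes> be, i \<otimes> i \<otimes> m, i \<otimes> i \<otimes> i \<otimes> u, bb \<otimes> i] = cseq [i \<otimes> be, bb \<otimes> i]"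
  by (simp add: cseq.simps nrmF m_ur)

lemma CU2_3: "cseq [i \<otimes> be, i \<otimes> i \<otimes> m, i \<otimes> i \<otimes> i \<otimes> u, bb \<otimes> i] = cseq [i \<otimes> be, bb \<otimes> i]"
  by (rule window[where pre="[]" and w="[i \<otimes> be, i \<otimes> i \<otimes> m, i \<otimes> i \<otimes> i \<otimes> u, bb \<otimes> i]" and suf="[]" and w'="[i \<otimes> be, bb \<otimes> i]"]) (simp_all add: CU2_w3)

lemma CU2_w4: "cseq [i \<otimes> be, bb \<otimes> i] = cseq [i]"
  by (simp add: cseq.simps sn1)

lemma CU2_4: "cseq [i \<otimes> be, bb \<otimes> i] = cseq [i]"
  by (rule window[where pre="[]" and w="[i \<otimes> be, bb \<otimes> i]" and suf="[]" and w'="[i]"]) (simp_all add: CU2_w4)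

lemma CU2: "cseq [i \<otimes> be, i \<otimes> i \<otimes> u, i \<otimes> m, bb \<otimes> i] = cseq [i]"

  apply (rule trans[OF CU2_1])

  apply (rule trans[OF CU2_2])

  apply (rule trans[OF CU2_3])

  by (rule CU2_4)

lemma CAL_w1: "cseq [m \<otimes> i, i \<otimes> bb] = cseq [i \<otimes> m, bb \<otimes> i]"
  by (simp add: cseq.simps Keq)

lemma CAL_1: "cseq [i \<otimes> m \<otimes> i, i \<otimes> i \<otimes> bb, m \<otimes> i, i \<otimes> bb] = cseq [i \<otimes> m \<otimes> i, i \<otimes> i \<otimes> bb, i \<otimes> m, bb \<otimes> i]"
  by (rule window[where pre="[i \<otimes> m \<otimes> i, i \<otimes> i \<otimes> bb]" and w="[m \<otimes> i, i \<otimes> bb]" and suf="[]" and w'="[i \<otimes> m, bb \<otimes> i]"]) (simp_all add: CAL_w1)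

lemma CAL_w2: "cseq [i \<otimes> i \<otimes> bb, i \<otimes> m] = cseq [i \<otimes> m \<otimes> i \<otimes> i, i \<otimes> i \<otimes> i \<otimes> bb]"
  by (simp add: cseq.simps nrmF)

lemma CAL_2: "cseq [i \<otimes> m \<otimes> i, i \<otimes> i \<otimes> bb, i \<otimes> m, bb \<otimes> i] = cseq [i \<otimes> m \<otimes> i, i \<otimes> m \<otimes> i \<otimes> i, i \<otimes> i \<otimes> i \<otimes> bb, bb \<otimes> i]"
  by (rule window[where pre="[i \<otimes> m \<otimes> i]" and w="[i \<otimes> i \<otimes> bb, i \<otimes> m]" and suf="[bb \<otimes> i]" and w'="[i \<otimes> m \<otimes> i \<otimes> i, i \<otimes> i \<otimes> i \<otimes> bb]"]) (simp_all add: CAL_w2)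

lemma CAL_w3: "cseq [i \<otimes> m \<otimes> i, i \<otimes> m \<otimes> i \<otimes> i] = cseq [i \<otimes> m \<otimes> i, i \<otimes> i \<otimes> m \<otimes> i]"
  by (simp add: cseq.simps nrmF m_assoc)

lemma CAL_3: "cseq [i \<otimes> m \<otimes> i, i \<otimes> m \<otimes> i \<otimes> i, i \<otimes> i \<otimes> i \<otimes> bb, bb \<otimes> i] = cseq [i \<otimes> m \<otimes> i, i \<otimes> i \<otimes> m \<otimes> i, i \<otimes> i \<otimes> i \<otimes> bb, bb \<otimes> i]"
  by (rule window[where pre="[]" and w="[i \<otimes> m \<otimes> i, i \<otimes> m \<otimes> i \<otimes> i]" and suf="[i \<otimes> i \<otimes> i \<otimes> bb, bb \<otimes> i]" and w'="[i \<otimes> m \<otimes> i, i \<otimes> i \<otimes> m \<otimes> i]"]) (simp_all add: CAL_w3)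

lemma CAL: "cseq [i \<otimes> m \<otimes> i, i \<otimes> i \<otimes> bb, m \<otimes> i, i \<otimes> bb] = cseq [i \<otimes> m \<otimes> i, i \<otimes> i \<otimes> m \<otimes> i, i \<otimes> i \<otimes> i \<otimes> bb, bb \<otimes> i]"

  apply (rule trans[OF CAL_1])

  apply (rule trans[OF CAL_2])

  by (rule CAL_3)

lemma CAR_w1: "cseq [m \<otimes> i \<otimes> i, i \<otimes> bb \<otimes> i] = cseq [i \<otimes> m \<otimes> i, bb \<otimes> i \<otimes> i]"
  by (simp add: cseq.simps nrmL Keq)

lemma CAR_1: "cseq [m \<otimes> i \<otimes> i, i \<otimes> bb \<otimes> i, m \<otimes> i, i \<otimes> bb] = cseq [i \<otimes> m \<otimes> i, bb \<otimes> i \<otimes> i, m \<otimes> i, i \<otimes> bb]"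
  by (rule window[where pre="[]" and w="[m \<otimes> i \<otimes> i, i \<otimes> bb \<otimes> i]" and suf="[m \<otimes> i, i \<otimes> bb]" and w'="[i \<otimes> m \<otimes> i, bb \<otimes> i \<otimes> i]"]) (simp_all add: CAR_w1)

lemma CAR_w2: "cseq [bb \<otimes> i \<otimes> i, m \<otimes> i, i \<otimes> bb] = cseq [i \<otimes> i \<otimes> m \<otimes> i, i \<otimes> i \<otimes> i \<otimes> bb, bb \<otimes> i]"
  by (simp add: cseq.simps nrmF)

lemma CAR_2: "cseq [i \<otimes> m \<otimes> i, bb \<otimes> i \<otimes> i, m \<otimes> i, i \<otimes> bb] = cseq [i \<otimes> m \<otimes> i, i \<otimes> i \<otimes> m \<otimes> i, i \<otimes> i \<otimes> i \<otimes> bb, bb \<otimes> i]"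
  by (rule window[where pre="[i \<otimes> m \<otimes> i]" and w="[bb \<otimes> i \<otimes> i, m \<otimes> i, i \<otimes> bb]" and suf="[]" and w'="[i \<otimes> i \<otimes> m \<otimes> i, i \<otimes> i \<otimes> i \<otimes> bb, bb \<otimes> i]"]) (simp_all add: CAR_w2)

lemma CAR: "cseq [m \<otimes> i \<otimes> i, i \<otimes> bb \<otimes> i, m \<otimes> i, i \<otimes> bb] = cseq [i \<otimes> m \<otimes> i, i \<otimes> i \<otimes> m \<otimes> i, i \<otimes> i \<otimes> i \<otimes> bb, bb \<otimes> i]"

  apply (rule trans[OF CAR_1])

  by (rule CAR_2)

end
context frob_loc begin

lemma frob_alg: "is_frobenius_algebra C X m u ((m \<otimes> i) \<cdot> (i \<otimes> bb)) (be \<cdot> (u \<otimes> i))"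
proof -
  let ?d = "(m \<otimes> i) \<cdot> (i \<otimes> bb)" and ?c = "be \<cdot> (u \<otimes> i)"
  have cc: "be \<cdot> (u \<otimes> i) = be \<cdot> (i \<otimes> u)" using CC by (simp add: cseq.simps)
  have ca1: "(?d \<otimes> i) \<cdot> ?d = cseq [m \<otimes> i \<otimes> i, i \<otimes> bb \<otimes> i, m \<otimes> i, i \<otimes> bb]"
    by (simp add: cseq.simps nrmL)
  have ca2: "(i \<otimes> ?d) \<cdot> ?d = cseq [i \<otimes> m \<otimes> i, i \<otimes> i \<otimes> bb, m \<otimes> i, i \<otimes> bb]"
    by (simp add: cseq.simps nrmF)
  have coassoc: "(?d \<otimes> i) \<cdot> ?d = (i \<otimes> ?d) \<cdot> ?d" unfolding ca1 ca2 CAR CAL ..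
  have cu1: "(?c \<otimes> i) \<cdot> ?d = i"
  proof -
    have "(?c \<otimes> i) \<cdot> ?d = cseq [be \<otimes> i, u \<otimes> i \<otimes> i, i \<otimes> m, bb \<otimes> i]"
      unfolding Keq by (simp add: cseq.simps nrmL)
    then show ?thesis using CU1 by (simp add: cseq.simps)
  qed
  have cu2: "(i \<otimes> ?c) \<cdot> ?d = i"
  proof -
    have "(i \<otimes> ?c) \<cdot> ?d = cseq [i \<otimes> be, i \<otimes> i \<otimes> u, i \<otimes> m, bb \<otimes> i]"
      unfolding Keq cc by (simp add: cseq.simps nrmF)
    then show ?thesis using CU2 by (simp add: cseq.simps)
  qed
  have fr1: "?d \<cdot> m = (m \<otimes> i) \<cdot> (i \<otimes> ?d)"
  proof -
    have "?d \<cdot> m = cseq [m \<otimes> i, i \<otimes> bb, m]" by (simp add: cseq.simps comp_assoc)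
    also have "\<dots> = cseq [m \<otimes> i, i \<otimes> m \<otimes> i, i \<otimes> i \<otimes> bb]" by (rule FR1)
    also have "\<dots> = (m \<otimes> i) \<cdot> (i \<otimes> ?d)" by (simp add: cseq.simps nrmF)
    finally show ?thesis .
  qed
  have fr2: "(i \<otimes> m) \<cdot> (?d \<otimes> i) = ?d \<cdot> m"
  proof -
    have "?d \<cdot> m = cseq [i \<otimes> m, bb \<otimes> i, m]" unfolding Keq by (simp add: cseq.simps comp_assoc)
    also have "\<dots> = cseq [i \<otimes> m, i \<otimes> m \<otimes> i, bb \<otimes> i \<otimes> i]" by (rule FR2)
    also have "\<dots> = (i \<otimes> m) \<cdot> (?d \<otimes> i)" unfolding Keq by (simp add: cseq.simps nrmL)
    finally show ?thesis by simp
  qed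
  have tyd: "hom C X (OT C X X) ?d" and tyc: "hom C X (Unit C) ?c" by (simp_all add: hom_iff)
  show ?thesis unfolding is_frobenius_algebra_def is_comonoid_def
    using mon tyd tyc coassoc cu1 cu2 fr1 fr2 by simp
qed
end

lemma frob_exists:
  assumes "smc0 C" "is_monoid C X m u" "monoid_frobenius_form C X m u be"
  shows "\<exists>d c. is_frobenius_algebra C X m u d c"
proof -
  obtain bb where bb: "hom C (Unit C) (OT C X X) bb"
     "Comp C (MT C (Id C X) be) (MT C bb (Id C X)) = Id C X"
     "Comp C (MT C be (Id C X)) (MT C (Id C X) bb) = Id C X"
    using assms(3) unfolding monoid_frobenius_form_def by blast
  have "frob_loc C X m u be bb"
    using assms bb unfolding monoid_frobenius_form_def
    by (intro frob_loc.intro smc0_loc.intro frob_loc_axioms.intro) auto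
  from frob_loc.frob_alg[OF this] show ?thesis by blast
qed
theorem mainTheorem3:
  fixes C :: "('o, 'm, 'z) smc_scheme"
  assumes "strict_smc C"
    and "is_integral_hopf C H mu eta delta eps s Lam lam"
  defines "\<beta> \<equiv> Comp C lam mu"
    and "\<gamma> \<equiv> Comp C (MT C s (Id C H)) (Comp C delta Lam)"
    and "\<gamma>' \<equiv> Comp C delta Lam"
  shows "let nondeg =
           (Comp C (MT C (Id C H) \<beta>) (MT C \<gamma> (Id C H)) = Id C H \<and>
            Comp C (MT C \<beta> (Id C H)) (MT C (Id C H) \<gamma>) = Id C H)
         in (nondeg \<longleftrightarrow> monoid_frobenius_form C H mu eta \<beta>) \<and>
            (monoid_frobenius_form C H mu eta \<beta> \<longleftrightarrow> comonoid_frobenius_form C H delta eps \<gamma>') \<and>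
            (nondeg \<longrightarrow> (\<exists>delta_g eps_g mu_r eta_r.
                is_pre_hopf_frobenius C H mu eta delta_g eps_g mu_r eta_r delta eps s))"
proof -
  have s1: "smc1 C" by (rule strict_smc_smc1[OF assms(1)])
  have s0: "smc0 C" using s1 unfolding smc1_def by blast
  interpret hopf_loc C H mu eta delta eps s Lam lam
    by (rule hopf_loc.intro[OF smc0_loc.intro[OF s0]]) (rule hopf_loc_axioms.intro[OF s1 assms(2)])
  have d1: "smc1 (dual C)" by (rule smc1_dual[OF s1])
  have d0: "smc0 (dual C)" using d1 unfolding smc1_def by blast
  interpret D: smc0_loc "dual C" by (rule smc0_loc.intro[OF d0])
  define gb where "gb = Comp C (Comp C lam mu) (MT C (Id C H) s)"
  have F1: "Comp C (MT C (Id C H) \<beta>) (MT C \<gamma> (Id C H)) = Id C H"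
    unfolding \<beta>_def \<gamma>_def by (rule F_main)
  have A1: "Comp C (MT C (Id C H) gb) (MT C \<gamma>' (Id C H)) = Id C H"
    unfolding gb_def \<gamma>'_def by (rule dual_F[OF s1 assms(2)])
  have G1: "Comp C (MT C gb (Id C H)) (MT C (Id C H) \<gamma>') = Comp C (MT C \<beta> (Id C H)) (MT C (Id C H) \<gamma>)"
    unfolding gb_def \<gamma>'_def \<beta>_def \<gamma>_def by (rule G_main)
  have tyb: "hom C (OT C H H) (Unit C) \<beta>" unfolding \<beta>_def by (simp add: hom_iff)
  have tyg: "hom C (Unit C) (OT C H H) \<gamma>" unfolding \<gamma>_def by (simp add: hom_iff)
  have tyg': "hom C (Unit C) (OT C H H) \<gamma>'" unfolding \<gamma>'_def by (simp add: hom_iff)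
  have tygb: "hom C (OT C H H) (Unit C) gb" unfolding gb_def by (simp add: hom_iff)
  have invb: "Comp C \<beta> (MT C mu (Id C H)) = Comp C \<beta> (MT C (Id C H) mu)"
    unfolding \<beta>_def by (simp add: comp_assoc m_assoc)
  have invg': "Comp C (MT C delta (Id C H)) \<gamma>' = Comp C (MT C (Id C H) delta) \<gamma>'"
    unfolding \<gamma>'_def by (simp add: comp_assoc[symmetric] d_coassoc)
  define nd where "nd = (Comp C (MT C (Id C H) \<beta>) (MT C \<gamma> (Id C H)) = Id C H \<and>
            Comp C (MT C \<beta> (Id C H)) (MT C (Id C H) \<gamma>) = Id C H)"
  have nd_iff: "nd \<longleftrightarrow> Comp C (MT C \<beta> (Id C H)) (MT C (Id C H) \<gamma>) = Id C H"
    unfolding nd_def using F1 by simp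
  have P1: "nd \<longleftrightarrow> monoid_frobenius_form C H mu eta \<beta>"
  proof
    assume "nd"
    then show "monoid_frobenius_form C H mu eta \<beta>"
      unfolding monoid_frobenius_form_def nd_def using tyb invb tyg by blast
  next
    assume "monoid_frobenius_form C H mu eta \<beta>"
    then obtain b' where b': "hom C (Unit C) (OT C H H) b'"
       "Comp C (MT C (Id C H) \<beta>) (MT C b' (Id C H)) = Id C H"
       "Comp C (MT C \<beta> (Id C H)) (MT C (Id C H) b') = Id C H"
      unfolding monoid_frobenius_form_def by blast
    have "\<gamma> = b'" by (rule uniq[OF objH tyb tyg b'(1) F1 b'(3)])
    then show "nd" unfolding nd_iff using b'(3) by simp
  qed
  have P2: "monoid_frobenius_form C H mu eta \<beta> \<longleftrightarrow> comonoid_frobenius_form C H delta eps \<gamma>'"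
  proof
    assume "monoid_frobenius_form C H mu eta \<beta>"
    then have "nd" using P1 by simp
    then have g: "Comp C (MT C gb (Id C H)) (MT C (Id C H) \<gamma>') = Id C H" unfolding nd_iff G1 .
    show "comonoid_frobenius_form C H delta eps \<gamma>'"
      unfolding comonoid_frobenius_form_def using tyg' invg' tygb A1 g by blast
  next
    assume "comonoid_frobenius_form C H delta eps \<gamma>'"
    then obtain g'' where g'': "hom C (OT C H H) (Unit C) g''"
       "Comp C (MT C (Id C H) g'') (MT C \<gamma>' (Id C H)) = Id C H"
       "Comp C (MT C g'' (Id C H)) (MT C (Id C H) \<gamma>') = Id C H"
      unfolding comonoid_frobenius_form_def by blast
    have "gb = g''"
      by (rule D.uniq) (use objH tyg' tygb g'' A1 in simp_all)
    then have "nd" unfolding nd_iff G1[symmetric] using g''(3) by simp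
    then show "monoid_frobenius_form C H mu eta \<beta>" using P1 by simp
  qed
  have P3: "nd \<longrightarrow> (\<exists>delta_g eps_g mu_r eta_r.
                is_pre_hopf_frobenius C H mu eta delta_g eps_g mu_r eta_r delta eps s)"
  proof
    assume "nd"
    then have mff: "monoid_frobenius_form C H mu eta \<beta>" using P1 by simp
    then have cff: "comonoid_frobenius_form C H delta eps \<gamma>'" using P2 by simp
    have mon: "is_monoid C H mu eta" and com: "is_comonoid C H delta eps"
      using hopf unfolding is_hopf_def by blast+
    obtain dg eg where g: "is_frobenius_algebra C H mu eta dg eg"
      using frob_exists[OF s0 mon mff] by blast
    have "is_monoid (dual C) H delta eps" using com by (simp add: dual_monoid)
    moreover have "monoid_frobenius_form (dual C) H delta eps \<gamma>'" using cff by (simp add: dual_mff)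
    ultimately obtain mr er where "is_frobenius_algebra (dual C) H delta eps mr er"
      using frob_exists[OF d0] by blast
    then have r: "is_frobenius_algebra C H mr er delta eps" by (simp add: dual_frob)
    show "\<exists>delta_g eps_g mu_r eta_r.
                is_pre_hopf_frobenius C H mu eta delta_g eps_g mu_r eta_r delta eps s"
      unfolding is_pre_hopf_frobenius_def using g r hopf by blast
  qed
  show ?thesis unfolding Let_def nd_def[symmetric] using P1 P2 P3 by blast
qed

end
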